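(* Let $N\ge 1$ and, for $1\le m\le N$, let $a_m,b_m\in\mathbb{R}$ with $b_m\neq 0$. Let $f_m:\mathbb{R}\to\mathbb{R}$, $f_m\in L^2(\mathbb{R})$, with $f_m$ not identically zero for at least one $m$. Let $\mathcal{K}_m:\mathbb{R}\to\mathbb{R}$, $\mathcal{K}_m\in L^1(\mathbb{R})$, with $\mathcal{K}:=\big(\sum_{m=1}^N\|\mathcal{K}_m\|_{L^1(\mathbb{R})}^2\big)^{1/2}>0$. Let $M>0$ and, for $j=1,2$, let $g_j=(g_{j,1},\dots,g_{j,N})$ with $g_{j,m}:\mathbb{R}^N\to\mathbb{R}$ differentiable, $g_{j,m}(0)=0$, $g_j$ not identically zero on $\mathbb{R}^N$, and $\sum_{m=1}^N\|\nabla g_{j,m}\|_{L^\infty(\mathbb{R}^N)}\le M$. Let $u_0\in L^2(\mathbb{R},\mathbb{R}^N)$ be the unique solution of $L_{a_m,b_m}u_{0,m}=f_m$, $1\le m\le N$. Let $0<\rho\le1$, $B_\rho:=\{u\in L^2(\mathbb{R},\mathbb{R}^N):\|u\|_{L^2(\mathbb{R},\mathbb{R}^N)}\le\rho\}$, $\varepsilon_m\ge0$, $\varepsilon:=\max_m\varepsilon_m$, and assume $$0<\varepsilon\le\frac{\rho C}{M\mathcal{K}\big(\|u_0\|_{L^2(\mathbb{R},\mathbb{R}^N)}+1\big)}.$$ For $j=1,2$ let $T_{g_j}:B_\rho\to B_\rho$ be the map $v\mapsto u$, where $u$ is the solution of $L_{a_m,b_m}u_m=\varepsilon_m\int_{\mathbb{R}}\mathcal{K}_m(x-y)g_{j,m}(u_0(y)+v(y))dy$,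 $1\le m\le N$, let $u_{p,j}$ be the unique fixed point of $T_{g_j}$ in $B_\rho$, and set $u_j:=u_0+u_{p,j}$. Let $\sigma:=\frac{\varepsilon M\mathcal{K}}{C}$. Then $$\|u_1-u_2\|_{L^2(\mathbb{R},\mathbb{R}^N)}\le\frac{\varepsilon}{1-\sigma}\,\frac{\mathcal{K}}{C}\big(\|u_0\|_{L^2(\mathbb{R},\mathbb{R}^N)}+1\big)\sum_{m=1}^N\|\nabla g_{1,m}-\nabla g_{2,m}\|_{L^\infty(\mathbb{R}^N)}.$$
   Context: Fourier transform: $\widehat{\phi}(p)=\frac{1}{\sqrt{2\pi}}\int_{\mathbb{R}}\phi(x)e^{-ipx}dx$. The logarithmic Laplacian $\ln(-\frac{d^2}{dx^2})$ is the operator with Fourier symbol $2\ln|p|$. For $a,b\in\mathbb{R}$, $b\ne0$, the operator $L_{a,b}:=\frac12\ln\big(-\frac{d^2}{dx^2}\big)-b\frac{d}{dx}-a$ on $L^2(\mathbb{R})$ has Fourier symbol $\lambda_{a,b}(p)=\ln\big(\frac{|p|}{e^{a}}\big)-ibp$; an equation $L_{a,b}w=h$ with $w,h\in L^2(\mathbb{R})$ means $\lambda_{a,b}(p)\widehat{w}(p)=\widehat{h}(p)$ for a.e. $p$. $C>0$ is a constant with $|\lambda_{a_m,b_m}(p)|\ge C$ for all $p\in\mathbb{R}$ and all $1\le m\le N$. For $u=(u_1,\dots,u_N)^T$, $\|u\|_{L^2(\mathbb{R},\mathbb{R}^N)}^2:=\sum_m\|u_m\|_{L^2(\mathbb{R})}^2$.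 $\|\cdot\|_{L^\infty(\mathbb{R}^N)}$ of a gradient is the sup norm of its Euclidean length. Under these hypotheses (a known result) each $T_{g_j}$ is a well-defined strict contraction of $B_\rho$ into itself, so $u_{p,j}$ exists and is unique, and $\sigma<1$. *)

theory Defs
  imports "HOL-Analysis.Analysis"
begin

definition L2_fun :: "(real \<Rightarrow> real) \<Rightarrow> bool" where
  "L2_fun w \<longleftrightarrow> w \<in> borel_measurable lborel \<and> integrable lborel (\<lambda>x. (w x)^2)"

text \<open>Elements of L2(R, R^N), with R^N = real^'n (N = CARD('n)).\<close>
definition L2_vec :: "(real \<Rightarrow> real^'n) \<Rightarrow> bool" where
  "L2_vec u \<longleftrightarrow> u \<in> borel_measurable lborel \<and> integrable lborel (\<lambda>x. (norm (u x))^2)"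

definition L2_norm_vec :: "(real \<Rightarrow> real^'n) \<Rightarrow> real" where
  "L2_norm_vec u = sqrt (LINT x|lborel. (norm (u x))^2)"

text \<open>Plancherel Fourier transform on L2: phi is the L2-limit of the truncated transforms
  (1/sqrt(2 pi)) int_{-R}^{R} w(x) e^{-ipx} dx as R tends to infinity.\<close>
definition fourier_L2 :: "(real \<Rightarrow> real) \<Rightarrow> (real \<Rightarrow> complex) \<Rightarrow> bool" where
  "fourier_L2 w \<phi> \<longleftrightarrow> \<phi> \<in> borel_measurable lborel \<and> integrable lborel (\<lambda>p. (cmod (\<phi> p))^2) \<and>
     ((\<lambda>R. LINT p|lborel. (cmod (\<phi> p - complex_of_real (1 / sqrt (2*pi)) *
        (LINT x|lborel. indicator {-R..R} x * (complex_of_real (w x) * cis (-(p*x))))))^2)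
      \<longlongrightarrow> 0) at_top"

text \<open>Fourier symbol of L_{a,b}: ln(|p|/e^a) - i b p.\<close>
definition lambda_sym :: "real \<Rightarrow> real \<Rightarrow> real \<Rightarrow> complex" where
  "lambda_sym a b p = complex_of_real (ln (\<bar>p\<bar> / exp a)) - \<i> * complex_of_real (b * p)"

definition L_eq :: "real \<Rightarrow> real \<Rightarrow> (real \<Rightarrow> real) \<Rightarrow> (real \<Rightarrow> real) \<Rightarrow> bool" where
  "L_eq a b w h \<longleftrightarrow> L2_fun w \<and> L2_fun h \<and>
     (\<exists>wh hh. fourier_L2 w wh \<and> fourier_L2 h hh \<and>
        (AE p in lborel. lambda_sym a b p * wh p = hh p))"

definition grad :: "(real^'n \<Rightarrow> real) \<Rightarrow> real^'n \<Rightarrow> real^'n" where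
  "grad g z = (SOME D. (g has_derivative (\<lambda>h. inner h D)) (at z))"

definition sup_norm :: "(real^'n \<Rightarrow> real^'n) \<Rightarrow> real" where
  "sup_norm G = Sup (range (\<lambda>z. norm (G z)))"

definition conv :: "(real \<Rightarrow> real) \<Rightarrow> (real \<Rightarrow> real) \<Rightarrow> real \<Rightarrow> real" where
  "conv K G x = (LINT y|lborel. K (x - y) * G y)"

end

theory Submission
  imports Defs "HOL-Probability.Probability"
begin


definition nL2 :: "(real \<Rightarrow> real) \<Rightarrow> real" where
  "nL2 f = sqrt (LINT x|lborel. (f x)^2)"

lemma sq_integrable_prod:
  fixes f g :: "'a \<Rightarrow> real"
  assumes [measurable]: "f \<in> borel_measurable M" "g \<in> borel_measurable M"
    and "integrable M (\<lambda>x. (f x)^2)" "integrable M (\<lambda>x. (g x)^2)"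
  shows "integrable M (\<lambda>x. f x * g x)"
proof (rule Bochner_Integration.integrable_bound[where f="\<lambda>x. (f x)^2 + (g x)^2"])
  show "integrable M (\<lambda>x. (f x)^2 + (g x)^2)" using assms by auto
  show "AE x in M. norm (f x * g x) \<le> norm ((f x)^2 + (g x)^2)"
  proof (rule AE_I2)
    fix x
    have "0 \<le> (\<bar>f x\<bar> - \<bar>g x\<bar>)^2" by simp
    then have "\<bar>f x\<bar> * \<bar>g x\<bar> * 2 \<le> (f x)^2 + (g x)^2"
      by (simp add: power2_eq_square algebra_simps)
    moreover have "0 \<le> \<bar>f x\<bar> * \<bar>g x\<bar>" by simp
    ultimately have "\<bar>f x\<bar> * \<bar>g x\<bar> \<le> (f x)^2 + (g x)^2" by linarith
    then show "norm (f x * g x) \<le> norm ((f x)^2 + (g x)^2)"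
      by (simp add: abs_mult)
  qed
qed auto

lemma CS_integral:
  fixes f g :: "'a \<Rightarrow> real"
  assumes [measurable]: "f \<in> borel_measurable M" "g \<in> borel_measurable M"
    and fi: "integrable M (\<lambda>x. (f x)^2)" and gi: "integrable M (\<lambda>x. (g x)^2)"
  shows "(LINT x|M. \<bar>f x * g x\<bar>) \<le> sqrt (LINT x|M. (f x)^2) * sqrt (LINT x|M. (g x)^2)"
proof -
  define a where "a = sqrt (LINT x|M. (f x)^2)"
  define b where "b = sqrt (LINT x|M. (g x)^2)"
  have a0: "a \<ge> 0" "b \<ge> 0" unfolding a_def b_def by (auto intro!: integral_nonneg_AE)
  have aa: "a^2 = (LINT x|M. (f x)^2)" "b^2 = (LINT x|M. (g x)^2)"
    unfolding a_def b_def by (auto intro!: integral_nonneg_AE)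
  have ip: "integrable M (\<lambda>x. \<bar>f x * g x\<bar>)"
    using sq_integrable_prod[OF assms] by auto
  show ?thesis
  proof (cases "a = 0 \<or> b = 0")
    case True
    then have "(LINT x|M. (f x)^2) = 0 \<or> (LINT x|M. (g x)^2) = 0" using aa by auto
    then have "(AE x in M. (f x)^2 = 0) \<or> (AE x in M. (g x)^2 = 0)"
      using integral_nonneg_eq_0_iff_AE[OF fi] integral_nonneg_eq_0_iff_AE[OF gi] by auto
    then have "AE x in M. \<bar>f x * g x\<bar> = 0"
    proof
      assume "AE x in M. (f x)^2 = 0"
      then show ?thesis by eventually_elim simp
    next
      assume "AE x in M. (g x)^2 = 0"
      then show ?thesis by eventually_elim simp
    qed
    then have "(LINT x|M. \<bar>f x * g x\<bar>) = 0" by (rule integral_eq_zero_AE)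
    then show ?thesis unfolding a_def[symmetric] b_def[symmetric] using a0 by simp
  next
    case False
    then have ap: "a > 0" "b > 0" using a0 by auto
    have pw: "\<bar>f x * g x\<bar> \<le> ((b/a) * (f x)^2 + (a/b) * (g x)^2) / 2" for x
    proof -
      define t where "t = b / a"
      have t: "t > 0" "a / b = 1 / t" using ap unfolding t_def by auto
      have "0 \<le> (t * \<bar>f x\<bar> - \<bar>g x\<bar>)^2" by simp
      then have "2 * t * \<bar>f x * g x\<bar> \<le> t^2 * (f x)^2 + (g x)^2"
        by (simp add: power2_eq_square algebra_simps abs_mult)
      then have "2 * t * \<bar>f x * g x\<bar> / t \<le> (t^2 * (f x)^2 + (g x)^2) / t"
        using t by (intro divide_right_mono) auto
      then have "2 * \<bar>f x * g x\<bar> \<le> t * (f x)^2 + (g x)^2 / t"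
        using t by (simp add: power2_eq_square add_divide_distrib)
      then show ?thesis unfolding t_def[symmetric] t by simp
    qed
    have "(LINT x|M. \<bar>f x * g x\<bar>) \<le> (LINT x|M. ((b/a) * (f x)^2 + (a/b) * (g x)^2) / 2)"
      using fi gi by (intro integral_mono ip pw) auto
    also have "\<dots> = ((b/a) * a^2 + (a/b) * b^2) / 2" using fi gi aa by simp
    also have "\<dots> = a * b" using ap by (simp add: power2_eq_square)
    finally show ?thesis unfolding a_def b_def .
  qed
qed

lemma CS_integral':
  fixes f g :: "'a \<Rightarrow> real"
  assumes "f \<in> borel_measurable M" "g \<in> borel_measurable M"
    and "integrable M (\<lambda>x. (f x)^2)" "integrable M (\<lambda>x. (g x)^2)"
  shows "\<bar>LINT x|M. f x * g x\<bar> \<le> sqrt (LINT x|M. (f x)^2) * sqrt (LINT x|M. (g x)^2)"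
  using CS_integral[OF assms] integral_abs_bound[of M "\<lambda>x. f x * g x"] by linarith

lemma Minkowski_integral:
  fixes f g :: "'a \<Rightarrow> real"
  assumes [measurable]: "f \<in> borel_measurable M" "g \<in> borel_measurable M"
    and fi: "integrable M (\<lambda>x. (f x)^2)" and gi: "integrable M (\<lambda>x. (g x)^2)"
  shows "integrable M (\<lambda>x. (f x + g x)^2)"
    "sqrt (LINT x|M. (f x + g x)^2) \<le> sqrt (LINT x|M. (f x)^2) + sqrt (LINT x|M. (g x)^2)"
proof -
  have ip: "integrable M (\<lambda>x. f x * g x)" by (rule sq_integrable_prod[OF assms])
  have e: "(\<lambda>x. (f x + g x)^2) = (\<lambda>x. (f x)^2 + 2 * (f x * g x) + (g x)^2)"
    by (simp add: power2_eq_square algebra_simps)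
  show "integrable M (\<lambda>x. (f x + g x)^2)" unfolding e using ip fi gi by auto
  have "(LINT x|M. (f x + g x)^2) = (LINT x|M. (f x)^2) + 2 * (LINT x|M. f x * g x) + (LINT x|M. (g x)^2)"
    unfolding e using ip fi gi by simp
  also have "\<dots> \<le> (LINT x|M. (f x)^2) + 2 * (sqrt (LINT x|M. (f x)^2) * sqrt (LINT x|M. (g x)^2)) + (LINT x|M. (g x)^2)"
    using CS_integral'[OF assms] by linarith
  also have "\<dots> = (sqrt (LINT x|M. (f x)^2) + sqrt (LINT x|M. (g x)^2))^2"
  proof -
    have "(LINT x|M. (f x)^2) \<ge> 0" "(LINT x|M. (g x)^2) \<ge> 0" by (auto intro!: integral_nonneg_AE)
    then show ?thesis by (simp add: power2_sum)
  qed
  finally have "(LINT x|M. (f x + g x)^2) \<le> (sqrt (LINT x|M. (f x)^2) + sqrt (LINT x|M. (g x)^2))^2" .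
  then show "sqrt (LINT x|M. (f x + g x)^2) \<le> sqrt (LINT x|M. (f x)^2) + sqrt (LINT x|M. (g x)^2)"
  proof -
    have "sqrt (LINT x|M. (f x + g x)^2) \<le> sqrt ((sqrt (LINT x|M. (f x)^2) + sqrt (LINT x|M. (g x)^2))^2)"
      by (rule real_sqrt_le_mono) fact
    also have "\<dots> = sqrt (LINT x|M. (f x)^2) + sqrt (LINT x|M. (g x)^2)"
      by (intro real_sqrt_unique) auto
    finally show ?thesis .
  qed
qed


lemma L2_funD: assumes "L2_fun f" shows "f \<in> borel_measurable lborel" "integrable lborel (\<lambda>x. (f x)^2)"
  using assms unfolding L2_fun_def by auto

lemma L2_fun_add: "L2_fun f \<Longrightarrow> L2_fun g \<Longrightarrow> L2_fun (\<lambda>x. f x + g x)"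
  unfolding L2_fun_def using Minkowski_integral(1)[of f lborel g] by auto

lemma L2_fun_cmult: "L2_fun f \<Longrightarrow> L2_fun (\<lambda>x. c * f x)"
  unfolding L2_fun_def by (auto simp: power_mult_distrib)

lemma L2_fun_minus: "L2_fun f \<Longrightarrow> L2_fun (\<lambda>x. - f x)"
  using L2_fun_cmult[of f "-1"] by simp

lemma L2_fun_diff: "L2_fun f \<Longrightarrow> L2_fun g \<Longrightarrow> L2_fun (\<lambda>x. f x - g x)"
  using L2_fun_add[of f "\<lambda>x. - g x"] L2_fun_minus[of g] by simp

lemma nL2_nonneg: "nL2 f \<ge> 0"
  unfolding nL2_def by (auto intro!: integral_nonneg_AE)

lemma nL2_sq: "(nL2 f)^2 = (LINT x|lborel. (f x)^2)"
  unfolding nL2_def by (auto intro!: integral_nonneg_AE)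

lemma nL2_add: "L2_fun f \<Longrightarrow> L2_fun g \<Longrightarrow> nL2 (\<lambda>x. f x + g x) \<le> nL2 f + nL2 g"
  unfolding nL2_def L2_fun_def using Minkowski_integral(2)[of f lborel g] by auto

lemma nL2_cmult: "nL2 (\<lambda>x. c * f x) = \<bar>c\<bar> * nL2 f"
  unfolding nL2_def by (simp add: power_mult_distrib real_sqrt_mult)

lemma nL2_minus: "nL2 (\<lambda>x. - f x) = nL2 f"
  using nL2_cmult[of "-1" f] by simp

lemma nL2_diff: "L2_fun f \<Longrightarrow> L2_fun g \<Longrightarrow> nL2 (\<lambda>x. f x - g x) \<le> nL2 f + nL2 g"
  using nL2_add[of f "\<lambda>x. - g x"] L2_fun_minus[of g] nL2_minus[of g] by simp

lemma L2_fun_bound: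
  assumes "L2_fun f" "g \<in> borel_measurable lborel" "AE x in lborel. \<bar>g x\<bar> \<le> c * \<bar>f x\<bar>" "c \<ge> 0"
  shows "L2_fun g" "nL2 g \<le> c * nL2 f"
proof -
  have b: "AE x in lborel. (g x)^2 \<le> (c * f x)^2"
    using assms(3) by eventually_elim (metis abs_ge_zero abs_mult abs_of_nonneg assms(4) power2_abs power_mono)
  have i: "integrable lborel (\<lambda>x. (c * f x)^2)" using L2_fun_cmult[OF assms(1)] L2_funD by blast
  show "L2_fun g" unfolding L2_fun_def
  proof
    show "integrable lborel (\<lambda>x. (g x)^2)"
      by (rule Bochner_Integration.integrable_bound[OF i]) (use assms(2) b in auto)
  qed fact
  then have "(LINT x|lborel. (g x)^2) \<le> (LINT x|lborel. (c * f x)^2)"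
    using i b by (intro integral_mono_AE) (auto simp: L2_fun_def)
  then have "nL2 g \<le> nL2 (\<lambda>x. c * f x)" unfolding nL2_def by simp
  then show "nL2 g \<le> c * nL2 f" using nL2_cmult[of c f] assms(4) by simp
qed

lemma L2_fun_shift:
  assumes "L2_fun f" shows "L2_fun (\<lambda>x. f (x + z))" "nL2 (\<lambda>x. f (x + z)) = nL2 f"
proof -
  have [measurable]: "f \<in> borel_measurable borel" using assms unfolding L2_fun_def by simp
  have m: "(\<lambda>x. f (x + z)) \<in> borel_measurable lborel" by simp
  have "integrable lborel (\<lambda>x. (f (z + 1 * x))^2)"
    using lborel_integrable_real_affine_iff[of 1 "\<lambda>x. (f x)^2" z] assms unfolding L2_fun_def by simp
  then show "L2_fun (\<lambda>x. f (x + z))" using m unfolding L2_fun_def by (simp add: add.commute)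
  have "(LINT x|lborel. (f x)^2) = (LINT x|lborel. (f (z + 1 * x))^2)"
    using lborel_integral_real_affine[of 1 "\<lambda>x. (f x)^2" z] by simp
  then show "nL2 (\<lambda>x. f (x + z)) = nL2 f" unfolding nL2_def by (simp add: add.commute)
qed

lemma sq_diff_int: "L2_fun f \<Longrightarrow> L2_fun g \<Longrightarrow> integrable lborel (\<lambda>x. (f x - g x)^2)"
  using L2_fun_diff L2_funD by blast


lemma int_ind_Icc: "integrable lborel (indicator {a..b::real} :: real \<Rightarrow> real)"
  by (rule integrable_real_indicator) (auto simp: emeasure_lborel_Icc_eq)

lemma abs_mult_le1: "0 \<le> (p::real) \<Longrightarrow> p \<le> 1 \<Longrightarrow> \<bar>y\<bar> \<le> B \<Longrightarrow> \<bar>p * y\<bar> \<le> B"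
proof -
  assume a: "0 \<le> p" "p \<le> 1" "\<bar>y\<bar> \<le> B"
  have "\<bar>p * y\<bar> = p * \<bar>y\<bar>" using a by (simp add: abs_mult)
  also have "\<dots> \<le> 1 * \<bar>y\<bar>" using a by (intro mult_right_mono) auto
  finally show ?thesis using a by simp
qed

lemma clamp_le: "0 \<le> B \<Longrightarrow> \<bar>max (- B) (min B (y::real))\<bar> \<le> B"
  by (simp add: abs_le_iff)

lemma L2_trunc_approx:
  assumes v: "L2_fun v" and e: "e > 0"
  shows "\<exists>n::nat. (LINT x|lborel. (v x - (if \<bar>x\<bar> \<le> real n then max (- real n) (min (real n) (v x)) else 0))^2) < e"
proof -
  define T where "T n x = (if \<bar>x\<bar> \<le> real n then max (- real n) (min (real n) (v x)) else 0)" for n :: nat and x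
  have [measurable]: "v \<in> borel_measurable borel" using v by (simp add: L2_fun_def)
  have Tm[measurable]: "T n \<in> borel_measurable borel" for n unfolding T_def by measurable
  have "(\<lambda>n. LINT x|lborel. (v x - T n x)^2) \<longlonglongrightarrow> (LINT (x::real)|lborel. 0)"
  proof (rule integral_dominated_convergence[where w="\<lambda>x. (v x)^2" and s="\<lambda>n x. (v x - T n x)^2" and f="\<lambda>x. 0"])
    show "integrable lborel (\<lambda>x. (v x)^2)" using v by (simp add: L2_fun_def)
    show "AE x in lborel. (\<lambda>n. (v x - T n x)^2) \<longlonglongrightarrow> 0"
    proof (rule AE_I2)
      fix x
      obtain N :: nat where N: "real N \<ge> max \<bar>x\<bar> \<bar>v x\<bar>" using real_arch_simple by blast
      have "eventually (\<lambda>n. (v x - T n x)^2 = 0) sequentially"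
        unfolding eventually_sequentially
      proof (intro exI allI impI)
        fix n assume "N \<le> n"
        then have "real N \<le> real n" by simp
        then have "real n \<ge> max \<bar>x\<bar> \<bar>v x\<bar>" using N by linarith
        then show "(v x - T n x)^2 = 0" unfolding T_def by auto
      qed
      then show "(\<lambda>n. (v x - T n x)^2) \<longlonglongrightarrow> 0" by (rule tendsto_eventually)
    qed
    show "AE x in lborel. norm ((v x - T n x)^2) \<le> (v x)^2" for n
    proof (rule AE_I2)
      fix x
      have "\<bar>v x - T n x\<bar> \<le> \<bar>v x\<bar>" unfolding T_def by auto
      then have "(v x - T n x)^2 \<le> (v x)^2" by (metis abs_ge_zero power2_abs power_mono)
      then show "norm ((v x - T n x)^2) \<le> (v x)^2" by simp
    qed
  qed auto
  then have "(\<lambda>n. LINT x|lborel. (v x - T n x)^2) \<longlonglongrightarrow> 0" by simp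
  from order_tendstoD(2)[OF this e] obtain n where "(LINT x|lborel. (v x - T n x)^2) < e"
    by (auto simp: eventually_sequentially)
  then show ?thesis unfolding T_def by blast
qed

lemma cont_approx_bounded:
  fixes u :: "real \<Rightarrow> real"
  assumes um[measurable]: "u \<in> borel_measurable borel" and uB: "\<And>x. \<bar>u x\<bar> \<le> B"
    and uR: "\<And>x. \<bar>x\<bar> > R \<Longrightarrow> u x = 0" and R: "R \<ge> 0" and e: "e > 0"
  shows "\<exists>h. continuous_on UNIV h \<and> (\<forall>x. \<bar>x\<bar> > R + 1 \<longrightarrow> h x = 0) \<and>
     integrable lborel (\<lambda>x. (u x - h x)^2) \<and> (LINT x|lborel. (u x - h x)^2) < e"
proof -
  have B: "B \<ge> 0" using uB[of 0] by simp
  have "u \<in> borel_measurable lebesgue" using um by (simp add: measurable_completion)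
  then have "u measurable_on UNIV" by (rule lebesgue_measurable_imp_measurable_on) simp
  then obtain N g where N: "negligible N" and gc: "\<And>n. continuous_on UNIV (g n)"
    and gl: "\<And>x. x \<notin> N \<Longrightarrow> (\<lambda>n. g n x) \<longlonglongrightarrow> u x"
    unfolding measurable_on_def by auto
  define psi where "psi x = max 0 (min 1 (R + 1 - \<bar>x\<bar>))" for x :: real
  define h where "h n x = psi x * max (- B) (min B (g n x))" for n x
  have psic: "continuous_on UNIV psi" unfolding psi_def by (intro continuous_intros)
  have hc: "continuous_on UNIV (h n)" for n unfolding h_def
    by (intro continuous_intros psic gc)
  have [measurable]: "h n \<in> borel_measurable borel" for n by (rule borel_measurable_continuous_onI[OF hc])
  have h0: "\<bar>x\<bar> > R + 1 \<Longrightarrow> h n x = 0" for n x unfolding h_def psi_def by auto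
  have psi1: "\<bar>x\<bar> \<le> R \<Longrightarrow> psi x = 1" for x unfolding psi_def by auto
  have psib: "0 \<le> psi x" "psi x \<le> 1" for x unfolding psi_def by auto
  have "AE x in lebesgue. x \<notin> N" using N negligible_iff_null_sets AE_not_in by blast
  then have AEN: "AE x in lborel. x \<notin> N" by (simp add: AE_completion_iff)
  have "(\<lambda>n. LINT x|lborel. (u x - h n x)^2) \<longlonglongrightarrow> (LINT (x::real)|lborel. 0)"
  proof (rule integral_dominated_convergence[where w="\<lambda>x. (2*B)^2 * indicator {-(R+1)..R+1} x" and s="\<lambda>n x. (u x - h n x)^2" and f="\<lambda>x. 0"])
    show "integrable lborel (\<lambda>x. (2*B)^2 * indicator {-(R+1)..R+1} x :: real)" using int_ind_Icc by simp
    show "AE x in lborel. (\<lambda>n. (u x - h n x)^2) \<longlonglongrightarrow> 0"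
      using AEN
    proof eventually_elim
      fix x assume "x \<notin> N"
      then have "(\<lambda>n. (u x - h n x)^2) \<longlonglongrightarrow> (u x - psi x * max (- B) (min B (u x)))^2"
        unfolding h_def by (intro tendsto_intros gl)
      also have "(u x - psi x * max (- B) (min B (u x)))^2 = 0"
      proof (cases "\<bar>x\<bar> \<le> R")
        case True then show ?thesis using psi1 uB[of x] by (auto simp: abs_le_iff)
      next
        case False then show ?thesis using uR[of x] B by auto
      qed
      finally show "(\<lambda>n. (u x - h n x)^2) \<longlonglongrightarrow> 0" .
    qed
    show "AE x in lborel. norm ((u x - h n x)^2) \<le> (2*B)^2 * indicator {-(R+1)..R+1} x" for n
    proof (rule AE_I2)
      fix x
      show "norm ((u x - h n x)^2) \<le> (2*B)^2 * indicator {-(R+1)..R+1} x"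
      proof (cases "\<bar>x\<bar> \<le> R + 1")
        case True
        have "\<bar>h n x\<bar> \<le> B" unfolding h_def using psib[of x] B
          by (intro abs_mult_le1 clamp_le)
        then have "\<bar>u x - h n x\<bar> \<le> 2 * B" using uB[of x] by linarith
        then have "(u x - h n x)^2 \<le> (2*B)^2" by (metis abs_ge_zero power2_abs power_mono)
        then show ?thesis using True by (simp add: indicator_def abs_le_iff)
      next
        case False then show ?thesis using h0[of x n] uR[of x] R by auto
      qed
    qed
  qed auto
  then have lim: "(\<lambda>n. LINT x|lborel. (u x - h n x)^2) \<longlonglongrightarrow> 0" by simp
  from order_tendstoD(2)[OF lim e] obtain n where n: "(LINT x|lborel. (u x - h n x)^2) < e"
    by (auto simp: eventually_sequentially)
  have "integrable lborel (\<lambda>x. (u x - h n x)^2)"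
  proof (rule Bochner_Integration.integrable_bound[where f="\<lambda>x. (2*B)^2 * indicator {-(R+1)..R+1} x"])
    show "integrable lborel (\<lambda>x. (2*B)^2 * indicator {-(R+1)..R+1} x :: real)" using int_ind_Icc by simp
    show "AE x in lborel. norm ((u x - h n x)^2) \<le> norm ((2*B)^2 * indicator {-(R+1)..R+1} x :: real)"
    proof (rule AE_I2)
      fix x
      show "norm ((u x - h n x)^2) \<le> norm ((2*B)^2 * indicator {-(R+1)..R+1} x :: real)"
      proof (cases "\<bar>x\<bar> \<le> R + 1")
        case True
        have "\<bar>h n x\<bar> \<le> B" unfolding h_def using psib[of x] B
          by (intro abs_mult_le1 clamp_le)
        then have "\<bar>u x - h n x\<bar> \<le> 2 * B" using uB[of x] by linarith
        then have "(u x - h n x)^2 \<le> (2*B)^2" by (metis abs_ge_zero power2_abs power_mono)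
        then show ?thesis using True by (simp add: indicator_def abs_le_iff)
      next
        case False then show ?thesis using h0[of x n] uR[of x] R by auto
      qed
    qed
  qed simp
  then show ?thesis using hc h0 n by blast
qed


lemma sq_sum2_le: "((a::real) + b)^2 \<le> 2 * a^2 + 2 * b^2"
proof -
  have "0 \<le> (a - b)^2" by simp
  then show ?thesis by (simp add: power2_eq_square algebra_simps)
qed

lemma sq_sum3_le: "((a::real) + b + c)^2 \<le> 3 * (a^2 + b^2 + c^2)"
proof -
  have "0 \<le> (a - b)^2 + (b - c)^2 + (a - c)^2" by simp
  then show ?thesis by (simp add: power2_eq_square algebra_simps)
qed

lemma L2_density:
  assumes v: "L2_fun v" and e: "e > 0"
  shows "\<exists>h R. continuous_on UNIV h \<and> R \<ge> 0 \<and> (\<forall>x. \<bar>x\<bar> > R \<longrightarrow> h x = 0) \<and> L2_fun h \<and>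
     (LINT x|lborel. (v x - h x)^2) < e"
proof -
  have [measurable]: "v \<in> borel_measurable borel" using v by (simp add: L2_fun_def)
  obtain n :: nat where n: "(LINT x|lborel. (v x - (if \<bar>x\<bar> \<le> real n then max (- real n) (min (real n) (v x)) else 0))^2) < e/4"
    using L2_trunc_approx[OF v, of "e/4"] e by auto
  define u where "u x = (if \<bar>x\<bar> \<le> real n then max (- real n) (min (real n) (v x)) else 0)" for x
  have um[measurable]: "u \<in> borel_measurable borel" unfolding u_def by measurable
  have uB: "\<bar>u x\<bar> \<le> real n" for x unfolding u_def by (auto simp: abs_le_iff)
  have uR: "\<bar>x\<bar> > real n \<Longrightarrow> u x = 0" for x unfolding u_def by auto
  obtain h where hc: "continuous_on UNIV h" and h0: "\<forall>x. \<bar>x\<bar> > real n + 1 \<longrightarrow> h x = 0"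
    and hi: "integrable lborel (\<lambda>x. (u x - h x)^2)" and hl: "(LINT x|lborel. (u x - h x)^2) < e/4"
    using cont_approx_bounded[where u=u and B="real n" and R="real n" and e="e/4", OF um uB uR] e by auto
  have [measurable]: "h \<in> borel_measurable borel" by (rule borel_measurable_continuous_onI[OF hc])
  have uL2: "L2_fun u"
  proof (rule L2_fun_bound(1)[where f="indicator {-real n..real n}" and c="real n"])
    have "(\<lambda>x. (indicator {-real n..real n} x :: real)^2) = indicator {-real n..real n}"
      by (auto simp: indicator_def fun_eq_iff)
    then show "L2_fun (indicator {-real n..real n})" unfolding L2_fun_def using int_ind_Icc
      by simp
    show "AE x in lborel. \<bar>u x\<bar> \<le> real n * \<bar>indicator {-real n..real n} x\<bar>"
      using uB uR by (intro AE_I2) (auto simp: indicator_def not_le)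
  qed auto
  have vu: "L2_fun (\<lambda>x. v x - u x)" by (rule L2_fun_diff[OF v uL2])
  have uh: "L2_fun (\<lambda>x. u x - h x)" unfolding L2_fun_def using hi by auto
  have hL2: "L2_fun h" using L2_fun_diff[OF uL2 uh] by simp
  have vh: "L2_fun (\<lambda>x. v x - h x)" by (rule L2_fun_diff[OF v hL2])
  have "(LINT x|lborel. (v x - h x)^2) \<le> (LINT x|lborel. 2 * (v x - u x)^2 + 2 * (u x - h x)^2)"
  proof (rule integral_mono)
    show "integrable lborel (\<lambda>x. (v x - h x)^2)" using vh by (simp add: L2_fun_def)
    show "integrable lborel (\<lambda>x. 2 * (v x - u x)^2 + 2 * (u x - h x)^2)"
      using vu uh by (simp add: L2_fun_def)
    show "(v x - h x)^2 \<le> 2 * (v x - u x)^2 + 2 * (u x - h x)^2" for x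
      using sq_sum2_le[of "v x - u x" "u x - h x"] by simp
  qed
  also have "\<dots> = 2 * (LINT x|lborel. (v x - u x)^2) + 2 * (LINT x|lborel. (u x - h x)^2)"
    using vu uh by (simp add: L2_fun_def)
  also have "\<dots> < e" using n hl unfolding u_def by simp
  finally show ?thesis using hc h0 hL2 by (intro exI[of _ h] exI[of _ "real n + 1"]) auto
qed

lemma L2_translation_continuity:
  assumes v: "L2_fun v" and e: "e > 0"
  shows "\<exists>d>0. \<forall>z. \<bar>z\<bar> < d \<longrightarrow> (LINT x|lborel. (v (x + z) - v x)^2) < e"
proof -
  obtain h R where hc: "continuous_on UNIV h" and R: "R \<ge> 0" and h0: "\<forall>x. \<bar>x\<bar> > R \<longrightarrow> h x = 0"
    and hL2: "L2_fun h" and hl: "(LINT x|lborel. (v x - h x)^2) < e/12"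
    using L2_density[OF v, of "e/12"] e by auto
  have [measurable]: "h \<in> borel_measurable borel" by (rule borel_measurable_continuous_onI[OF hc])
  define eta where "eta = sqrt (e / (12 * (R + 1)))"
  have eta2: "eta^2 = e / (12 * (R + 1))" unfolding eta_def using e R by simp
  have eta: "eta > 0" "eta^2 * (2 * (R + 1)) = e / 6"
    using e R unfolding eta2 by (auto simp: eta_def field_simps)
  have "uniformly_continuous_on (cball 0 (R + 2)) h"
    by (rule compact_uniformly_continuous) (auto intro: continuous_on_subset[OF hc])
  then obtain d0 where d0: "d0 > 0"
    and ucont: "\<And>x y. x \<in> cball 0 (R+2) \<Longrightarrow> y \<in> cball 0 (R+2) \<Longrightarrow> dist y x < d0 \<Longrightarrow> dist (h y) (h x) < eta"
    unfolding uniformly_continuous_on_def using eta(1) by metis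
  define d where "d = min d0 1"
  have d: "d > 0" unfolding d_def using d0 by simp
  have vh: "L2_fun (\<lambda>x. v x - h x)" by (rule L2_fun_diff[OF v hL2])
  show ?thesis
  proof (intro exI[of _ d] conjI allI impI d)
    fix z :: real assume z: "\<bar>z\<bar> < d"
    have vhs: "L2_fun (\<lambda>x. v (x + z) - h (x + z))" and vhs_n: "nL2 (\<lambda>x. v (x + z) - h (x + z)) = nL2 (\<lambda>x. v x - h x)"
      using L2_fun_shift[OF vh, of z] by auto
    have hs: "L2_fun (\<lambda>x. h (x + z))" using L2_fun_shift[OF hL2] by auto
    have hh: "L2_fun (\<lambda>x. h (x + z) - h x)" by (rule L2_fun_diff[OF hs hL2])
    have hv: "L2_fun (\<lambda>x. h x - v x)" by (rule L2_fun_diff[OF hL2 v])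
    have vs: "L2_fun (\<lambda>x. v (x + z))" using L2_fun_shift[OF v] by auto
    have vv: "L2_fun (\<lambda>x. v (x + z) - v x)" by (rule L2_fun_diff[OF vs v])
    have pw: "(h (x + z) - h x)^2 \<le> eta^2 * indicator {-(R+1)..R+1} x" for x
    proof (cases "\<bar>x\<bar> \<le> R + 1")
      case True
      have "dist (h (x + z)) (h x) < eta"
        using True z unfolding d_def by (intro ucont) (auto simp: dist_real_def)
      then have "\<bar>h (x + z) - h x\<bar> \<le> eta" by (simp add: dist_real_def)
      then have "(h (x + z) - h x)^2 \<le> eta^2" by (metis abs_ge_zero power2_abs power_mono)
      then show ?thesis using True by (simp add: indicator_def abs_le_iff)
    next
      case False
      then have "\<bar>x + z\<bar> > R" using z unfolding d_def by auto
      then show ?thesis using False h0 by auto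
    qed
    have J: "(LINT x|lborel. (h (x + z) - h x)^2) \<le> e / 6"
    proof -
      have "(LINT x|lborel. (h (x + z) - h x)^2) \<le> (LINT x|lborel. eta^2 * indicator {-(R+1)..R+1} x)"
        using hh pw int_ind_Icc by (intro integral_mono) (auto simp: L2_fun_def)
      also have "\<dots> = eta^2 * (2 * (R + 1))" using R by simp
      finally show ?thesis using eta by simp
    qed
    have I1: "(LINT x|lborel. (v (x + z) - h (x + z))^2) = (LINT x|lborel. (v x - h x)^2)"
      using vhs_n unfolding nL2_def using vh vhs
      by (metis L2_fun_def integral_nonneg_AE real_sqrt_eq_iff AE_I2 zero_le_power2 real_sqrt_eq_iff)
    have I2: "(LINT x|lborel. (h x - v x)^2) = (LINT x|lborel. (v x - h x)^2)"
      by (simp add: power2_commute)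
    have "(LINT x|lborel. (v (x + z) - v x)^2) \<le>
        (LINT x|lborel. 3 * ((v (x + z) - h (x + z))^2 + (h (x + z) - h x)^2 + (h x - v x)^2))"
    proof (rule integral_mono)
      show "integrable lborel (\<lambda>x. (v (x + z) - v x)^2)" using vv by (simp add: L2_fun_def)
      show "integrable lborel (\<lambda>x. 3 * ((v (x + z) - h (x + z))^2 + (h (x + z) - h x)^2 + (h x - v x)^2))"
        using vhs hh hv by (simp add: L2_fun_def)
      show "(v (x + z) - v x)^2 \<le> 3 * ((v (x + z) - h (x + z))^2 + (h (x + z) - h x)^2 + (h x - v x)^2)" for x
        using sq_sum3_le[of "v (x + z) - h (x + z)" "h (x + z) - h x" "h x - v x"] by simp
    qed
    also have "\<dots> = 3 * ((LINT x|lborel. (v (x + z) - h (x + z))^2) + (LINT x|lborel. (h (x + z) - h x)^2)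
        + (LINT x|lborel. (h x - v x)^2))"
      using vhs hh hv by (simp add: L2_fun_def)
    also have "\<dots> < e" using I1 I2 J hl by simp
    finally show "(LINT x|lborel. (v (x + z) - v x)^2) < e" .
  qed
qed


definition gauss :: "real \<Rightarrow> real" where "gauss x = exp (-(x^2) / 2)"

lemma gauss_pos: "gauss x > 0" unfolding gauss_def by simp
lemma gauss_le1: "gauss x \<le> 1" unfolding gauss_def by simp
lemma gauss_meas[measurable]: "gauss \<in> borel_measurable borel" unfolding gauss_def by measurable

lemma gauss_std: "gauss x = sqrt (2 * pi) * std_normal_density x"
  unfolding gauss_def std_normal_density_def by simp

lemma gauss_integrable: "integrable lborel gauss"
  and gauss_integral: "(LINT x|lborel. gauss x) = sqrt (2 * pi)"
proof -
  have h: "has_bochner_integral lborel (\<lambda>x. std_normal_density x) 1"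
    using std_normal_moment_even[of 0] by simp
  have "has_bochner_integral lborel (\<lambda>x. sqrt (2 * pi) * std_normal_density x) (sqrt (2 * pi) * 1)"
    by (intro has_bochner_integral_mult_right h)
  then have "has_bochner_integral lborel gauss (sqrt (2 * pi))"
    by (simp add: gauss_std[abs_def])
  then show "integrable lborel gauss" "(LINT x|lborel. gauss x) = sqrt (2 * pi)"
    by (auto simp: has_bochner_integral_iff)
qed

lemma gauss_cos_integrable: "integrable lborel (\<lambda>p. gauss p * cos (p * z))"
  by (rule Bochner_Integration.integrable_bound[OF gauss_integrable])
     (auto simp: abs_mult gauss_pos less_imp_le intro!: mult_left_le)

lemma gauss_cos_integral: "(LINT p|lborel. gauss p * cos (p * z)) = sqrt (2 * pi) * gauss z"
proof -
  have ci: "complex_integrable lborel (\<lambda>x. std_normal_density x *\<^sub>R iexp (z * x))"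
  proof (rule Bochner_Integration.integrable_bound[where f="\<lambda>x. std_normal_density x"])
    show "integrable lborel (\<lambda>x. std_normal_density x)"
      using std_normal_moment_even[of 0] by (simp add: has_bochner_integral_iff)
    show "AE x in lborel. norm (std_normal_density x *\<^sub>R iexp (z * x)) \<le> norm (std_normal_density x)"
      by (intro AE_I2) (simp add: norm_exp_i_times)
  qed measurable
  have "char std_normal_distribution z = integral\<^sup>L lborel (\<lambda>x. std_normal_density x *\<^sub>R iexp (z * x))"
    unfolding char_def by (subst integral_density) auto
  then have "complex_of_real (exp (-(z^2) / 2)) = integral\<^sup>L lborel (\<lambda>x. std_normal_density x *\<^sub>R iexp (z * x))"
    using char_std_normal_distribution by simp
  then have "exp (-(z^2) / 2) = Re (integral\<^sup>L lborel (\<lambda>x. std_normal_density x *\<^sub>R iexp (z * x)))"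
    by (metis Re_complex_of_real)
  also have "\<dots> = (LINT x|lborel. Re (std_normal_density x *\<^sub>R iexp (z * x)))"
    using integral_Re[OF ci] by simp
  also have "\<dots> = (LINT x|lborel. std_normal_density x * cos (x * z))"
    by (intro Bochner_Integration.integral_cong) (auto simp: Re_exp mult.commute)
  finally have e: "(LINT x|lborel. std_normal_density x * cos (x * z)) = gauss z"
    unfolding gauss_def by simp
  have "(LINT p|lborel. gauss p * cos (p * z)) = (LINT p|lborel. sqrt (2 * pi) * (std_normal_density p * cos (p * z)))"
    by (simp add: gauss_std mult.assoc)
  also have "\<dots> = sqrt (2 * pi) * gauss z" using e by simp
  finally show ?thesis .
qed

lemma gauss_cos_scaled:
  assumes s: "s > 0"
  shows "integrable lborel (\<lambda>p. gauss (s * p) * cos (p * z))"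
    "(LINT p|lborel. gauss (s * p) * cos (p * z)) = sqrt (2 * pi) / s * gauss (z / s)"
proof -
  let ?f = "\<lambda>x. gauss x * cos (x * (z / s))"
  have e: "(\<lambda>p. gauss (s * p) * cos (p * z)) = (\<lambda>p. ?f (0 + s * p))"
    using s by (auto simp: fun_eq_iff)
  show "integrable lborel (\<lambda>p. gauss (s * p) * cos (p * z))"
    unfolding e using lborel_integrable_real_affine_iff[of s ?f 0] s gauss_cos_integrable[of "z/s"] by simp
  have "integral\<^sup>L lborel ?f = \<bar>s\<bar> *\<^sub>R (LINT p|lborel. ?f (0 + s * p))"
    using lborel_integral_real_affine[of s ?f 0] s by simp
  then have "(LINT p|lborel. ?f (0 + s * p)) = integral\<^sup>L lborel ?f / s" using s by simp
  then show "(LINT p|lborel. gauss (s * p) * cos (p * z)) = sqrt (2 * pi) / s * gauss (z / s)"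
    unfolding e gauss_cos_integral by simp
qed


lemma cos_meas[measurable]: "(cos :: real \<Rightarrow> real) \<in> borel_measurable borel"
  using borel_measurable_continuous_onI[OF continuous_on_cos[OF continuous_on_id]] by simp
lemma sin_meas[measurable]: "(sin :: real \<Rightarrow> real) \<in> borel_measurable borel"
  using borel_measurable_continuous_onI[OF continuous_on_sin[OF continuous_on_id]] by simp
lemma cis_meas[measurable]: "cis \<in> borel_measurable borel"
  unfolding cis_conv_exp by measurable

lemma integrable_mult_bounded:
  fixes v :: "real \<Rightarrow> real"
  assumes "integrable lborel v" "g \<in> borel_measurable lborel" "\<And>x. \<bar>g x\<bar> \<le> 1"
  shows "integrable lborel (\<lambda>x. v x * g x)"
proof (rule Bochner_Integration.integrable_bound[OF assms(1)])
  show "(\<lambda>x. v x * g x) \<in> borel_measurable lborel"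
    using assms borel_measurable_integrable by measurable
  show "AE x in lborel. norm (v x * g x) \<le> norm (v x)"
    using assms(3) by (intro AE_I2) (simp add: abs_mult mult_left_le)
qed

lemma int_prod_sep:
  fixes f g :: "real \<Rightarrow> real"
  assumes f: "integrable lborel f" and g: "integrable lborel g"
  shows "integrable (lborel \<Otimes>\<^sub>M lborel) (\<lambda>(x, y). f x * g y)"
proof -
  have [measurable]: "f \<in> borel_measurable borel" "g \<in> borel_measurable borel"
    using f g by (auto dest: borel_measurable_integrable)
  have "integrable (lborel \<Otimes>\<^sub>M lborel) (\<lambda>z. f (fst z) * g (snd z))"
  proof (rule lborel_pair.Fubini_integrable)
    show "integrable lborel (\<lambda>x. LINT y|lborel. norm (f (fst (x, y)) * g (snd (x, y))))"
      using f g by (simp add: abs_mult)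
    show "AE x in lborel. integrable lborel (\<lambda>y. f (fst (x, y)) * g (snd (x, y)))"
      using g by simp
  qed measurable
  then show ?thesis by (simp add: case_prod_beta')
qed

lemma int_prod_bound:
  fixes f g :: "real \<Rightarrow> real" and h :: "real \<times> real \<Rightarrow> real"
  assumes f: "integrable lborel f" and g: "integrable lborel g"
    and hm: "h \<in> borel_measurable (lborel \<Otimes>\<^sub>M lborel)"
    and b: "\<And>x y. \<bar>h (x, y)\<bar> \<le> f x * g y"
  shows "integrable (lborel \<Otimes>\<^sub>M lborel) h"
proof (rule Bochner_Integration.integrable_bound[OF int_prod_sep[OF f g] hm])
  show "AE z in lborel \<Otimes>\<^sub>M lborel. norm (h z) \<le> norm (case z of (x, y) \<Rightarrow> f x * g y)"
    using b by (intro AE_I2) (auto split: prod.splits intro: order_trans[OF _ abs_ge_self])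
qed

context
  fixes v :: "real \<Rightarrow> real"
  assumes vm[measurable]: "v \<in> borel_measurable borel"
    and vi: "integrable lborel v" and v2: "integrable lborel (\<lambda>x. (v x)^2)"
begin

definition "Cc p = (LINT x|lborel. v x * cos (p * x))"
definition "Ss p = (LINT x|lborel. v x * sin (p * x))"
definition "Fv p = (CLINT x|lborel. complex_of_real (v x) * cis (-(p * x)))"

lemma int_cos: "integrable lborel (\<lambda>x. v x * cos (f x))" if [measurable]: "f \<in> borel_measurable borel"
  by (rule integrable_mult_bounded[OF vi]) auto

lemma int_sin: "integrable lborel (\<lambda>x. v x * sin (f x))" if [measurable]: "f \<in> borel_measurable borel"
  by (rule integrable_mult_bounded[OF vi]) auto

lemma Fv_cmod: "(cmod (Fv p))^2 = (Cc p)^2 + (Ss p)^2"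
proof -
  have ci: "complex_integrable lborel (\<lambda>x. complex_of_real (v x) * cis (-(p * x)))"
  proof (rule Bochner_Integration.integrable_bound[OF vi])
    show "AE x in lborel. norm (complex_of_real (v x) * cis (-(p * x))) \<le> norm (v x)"
      by (intro AE_I2) (simp add: norm_mult)
  qed measurable
  have "Re (Fv p) = (LINT x|lborel. Re (complex_of_real (v x) * cis (-(p * x))))"
    unfolding Fv_def using integral_Re[OF ci] by simp
  also have "\<dots> = Cc p" unfolding Cc_def by (intro Bochner_Integration.integral_cong) auto
  finally have re: "Re (Fv p) = Cc p" .
  have "Im (Fv p) = (LINT x|lborel. Im (complex_of_real (v x) * cis (-(p * x))))"
    unfolding Fv_def using integral_Im[OF ci] by simp
  also have "\<dots> = (LINT x|lborel. - (v x * sin (p * x)))" by (intro Bochner_Integration.integral_cong) auto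
  also have "\<dots> = - Ss p" unfolding Ss_def by simp
  finally have im: "Im (Fv p) = - Ss p" .
  show ?thesis unfolding cmod_power2 re im by simp
qed

lemma Cc_meas[measurable]: "Cc \<in> borel_measurable borel"
  unfolding Cc_def[abs_def] by measurable
lemma Ss_meas[measurable]: "Ss \<in> borel_measurable borel"
  unfolding Ss_def[abs_def] by measurable
lemma Fv_meas[measurable]: "Fv \<in> borel_measurable borel"
  unfolding Fv_def[abs_def] by measurable

definition "N1 = (LINT x|lborel. \<bar>v x\<bar>)"

lemma int_trig_bound: assumes "\<And>x. \<bar>g x\<bar> \<le> 1" shows "\<bar>LINT x|lborel. v x * g x\<bar> \<le> N1"
proof -
  have "\<bar>LINT x|lborel. v x * g x\<bar> \<le> (LINT x|lborel. \<bar>v x * g x\<bar>)" by (rule integral_abs_bound)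
  also have "\<dots> \<le> N1" unfolding N1_def
    using vi assms by (intro integral_mono') (auto simp: abs_mult mult_left_le)
  finally show ?thesis .
qed

lemma Cc_bound: "\<bar>Cc p\<bar> \<le> N1" unfolding Cc_def by (rule int_trig_bound) simp
lemma Ss_bound: "\<bar>Ss p\<bar> \<le> N1" unfolding Ss_def by (rule int_trig_bound) simp
lemma N1_nonneg: "N1 \<ge> 0" unfolding N1_def by simp

definition "Bf p x = (LINT y|lborel. v y * cos (p * (x - y)))"

lemma Bf_meas[measurable]: "(\<lambda>(p, x). Bf p x) \<in> borel_measurable (lborel \<Otimes>\<^sub>M lborel)"
  unfolding Bf_def by measurable

lemma Bf_eq: "Bf p x = cos (p * x) * Cc p + sin (p * x) * Ss p"
proof -
  have "Bf p x = (LINT y|lborel. cos (p * x) * (v y * cos (p * y)) + sin (p * x) * (v y * sin (p * y)))"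
    unfolding Bf_def by (intro Bochner_Integration.integral_cong) (auto simp: right_diff_distrib cos_diff algebra_simps)
  also have "\<dots> = cos (p * x) * Cc p + sin (p * x) * Ss p"
    unfolding Cc_def Ss_def using int_cos[of "\<lambda>y. p * y"] int_sin[of "\<lambda>y. p * y"] by simp
  finally show ?thesis .
qed

lemma Bf_bound: "\<bar>Bf p x\<bar> \<le> N1" unfolding Bf_def by (rule int_trig_bound) simp

lemma CS_sq: "(Cc p)^2 + (Ss p)^2 = (LINT x|lborel. v x * Bf p x)"
proof -
  have "(LINT x|lborel. v x * Bf p x) = (LINT x|lborel. Cc p * (v x * cos (p * x)) + Ss p * (v x * sin (p * x)))"
    unfolding Bf_eq by (intro Bochner_Integration.integral_cong) (auto simp: algebra_simps)
  also have "\<dots> = Cc p * Cc p + Ss p * Ss p"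
    unfolding Cc_def[of p] Ss_def[of p] using int_cos[of "\<lambda>y. p * y"] int_sin[of "\<lambda>y. p * y"] by simp
  finally show ?thesis by (simp add: power2_eq_square)
qed

lemma gauss_s_int: "s > 0 \<Longrightarrow> integrable lborel (\<lambda>p. gauss (s * p))"
  using gauss_cos_scaled(1)[of s 0] by simp

lemma absv_int: "integrable lborel (\<lambda>x. \<bar>v x\<bar>)" using vi by simp

lemma stepE1:
  assumes s: "s > 0"
  shows "(LINT p|lborel. gauss (s * p) * ((Cc p)^2 + (Ss p)^2)) =
     (LINT x|lborel. v x * (LINT p|lborel. gauss (s * p) * Bf p x))"
proof -
  have int: "integrable (lborel \<Otimes>\<^sub>M lborel) (\<lambda>(x, p). gauss (s * p) * (v x * Bf p x))"
  proof (rule int_prod_bound[OF absv_int, where g="\<lambda>p. N1 * gauss (s * p)"])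
    show "integrable lborel (\<lambda>p. N1 * gauss (s * p))" using gauss_s_int[OF s] by simp
    show "(\<lambda>(x, p). gauss (s * p) * (v x * Bf p x)) \<in> borel_measurable (lborel \<Otimes>\<^sub>M lborel)"
      unfolding Bf_def by measurable
    show "\<bar>case (x, p) of (x, p) \<Rightarrow> gauss (s * p) * (v x * Bf p x)\<bar> \<le> \<bar>v x\<bar> * (N1 * gauss (s * p))" for x p
    proof -
      have "\<bar>gauss (s * p) * (v x * Bf p x)\<bar> = gauss (s * p) * \<bar>v x\<bar> * \<bar>Bf p x\<bar>"
        using gauss_pos[of "s*p"] by (simp add: abs_mult)
      also have "\<dots> \<le> gauss (s * p) * \<bar>v x\<bar> * N1"
        using Bf_bound[of p x] gauss_pos[of "s*p"] by (intro mult_left_mono) auto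
      finally show ?thesis by (simp add: algebra_simps)
    qed
  qed
  have "(LINT p|lborel. gauss (s * p) * ((Cc p)^2 + (Ss p)^2)) =
      (LINT p|lborel. LINT x|lborel. gauss (s * p) * (v x * Bf p x))"
    unfolding CS_sq by simp
  also have "\<dots> = (LINT x|lborel. LINT p|lborel. gauss (s * p) * (v x * Bf p x))"
    using lborel_pair.Fubini_integral[OF int] by simp
  also have "\<dots> = (LINT x|lborel. v x * (LINT p|lborel. gauss (s * p) * Bf p x))"
    by (intro Bochner_Integration.integral_cong refl) (simp add: mult.left_commute)
  finally show ?thesis .
qed

lemma stepE2:
  assumes s: "s > 0"
  shows "(LINT p|lborel. gauss (s * p) * Bf p x) =
     (LINT y|lborel. v y * (sqrt (2 * pi) / s * gauss ((x - y) / s)))"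
proof -
  have int: "integrable (lborel \<Otimes>\<^sub>M lborel) (\<lambda>(y, p). gauss (s * p) * (v y * cos (p * (x - y))))"
  proof (rule int_prod_bound[OF absv_int, where g="\<lambda>p. gauss (s * p)"])
    show "integrable lborel (\<lambda>p. gauss (s * p))" using gauss_s_int[OF s] by simp
    show "(\<lambda>(y, p). gauss (s * p) * (v y * cos (p * (x - y)))) \<in> borel_measurable (lborel \<Otimes>\<^sub>M lborel)"
      by measurable
    show "\<bar>case (y, p) of (y, p) \<Rightarrow> gauss (s * p) * (v y * cos (p * (x - y)))\<bar> \<le> \<bar>v y\<bar> * gauss (s * p)" for y p
    proof -
      have "gauss (s * p) * \<bar>cos (p * (x - y))\<bar> \<le> gauss (s * p)"
        using gauss_pos[of "s*p"] by (intro mult_left_le) (auto simp: less_imp_le)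
      then have "\<bar>v y\<bar> * (gauss (s * p) * \<bar>cos (p * (x - y))\<bar>) \<le> \<bar>v y\<bar> * gauss (s * p)"
        by (intro mult_left_mono) auto
      then show ?thesis using gauss_pos[of "s*p"] by (simp add: abs_mult mult.commute mult.left_commute)
    qed
  qed
  have "(LINT p|lborel. gauss (s * p) * Bf p x) = (LINT p|lborel. LINT y|lborel. gauss (s * p) * (v y * cos (p * (x - y))))"
    unfolding Bf_def by simp
  also have "\<dots> = (LINT y|lborel. LINT p|lborel. gauss (s * p) * (v y * cos (p * (x - y))))"
    using lborel_pair.Fubini_integral[OF int] by simp
  also have "\<dots> = (LINT y|lborel. v y * (LINT p|lborel. gauss (s * p) * cos (p * (x - y))))"
    by (intro Bochner_Integration.integral_cong refl) (simp add: mult.left_commute)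
  also have "\<dots> = (LINT y|lborel. v y * (sqrt (2 * pi) / s * gauss ((x - y) / s)))"
    using gauss_cos_scaled(2)[OF s] by simp
  finally show ?thesis .
qed

lemma vL2: "L2_fun v" unfolding L2_fun_def using v2 by simp

lemma vshift: "L2_fun (\<lambda>x. v (x - z))" "(LINT x|lborel. (v (x - z))^2) = (LINT x|lborel. (v x)^2)"
proof -
  show "L2_fun (\<lambda>x. v (x - z))" using L2_fun_shift(1)[OF vL2, of "-z"] by simp
  have "nL2 (\<lambda>x. v (x - z)) = nL2 v" using L2_fun_shift(2)[OF vL2, of "-z"] by simp
  then have "(nL2 (\<lambda>x. v (x - z)))^2 = (nL2 v)^2" by simp
  then show "(LINT x|lborel. (v (x - z))^2) = (LINT x|lborel. (v x)^2)" unfolding nL2_sq .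
qed

definition "Af z = (LINT x|lborel. v x * v (x - z))"

lemma vv_int: "integrable lborel (\<lambda>x. v x * v (x - z))"
  using vshift(1)[of z] vL2 by (intro sq_integrable_prod) (auto simp: L2_fun_def)

lemma vv_abs_bound: "(LINT x|lborel. \<bar>v x * v (x - z)\<bar>) \<le> (LINT x|lborel. (v x)^2)"
proof -
  have "(LINT x|lborel. \<bar>v x * v (x - z)\<bar>) \<le> sqrt (LINT x|lborel. (v x)^2) * sqrt (LINT x|lborel. (v (x - z))^2)"
    using vshift(1)[of z] vL2 by (intro CS_integral) (auto simp: L2_fun_def)
  also have "\<dots> = (LINT x|lborel. (v x)^2)" unfolding vshift(2)
    by (simp add: integral_nonneg_AE)
  finally show ?thesis .
qed

lemma Af_bound: "\<bar>Af z\<bar> \<le> (LINT x|lborel. (v x)^2)"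
  unfolding Af_def using integral_abs_bound[of lborel "\<lambda>x. v x * v (x - z)"] vv_abs_bound[of z] by linarith

lemma Af_meas[measurable]: "Af \<in> borel_measurable borel"
  unfolding Af_def[abs_def] by measurable

lemma Af0: "Af 0 = (LINT x|lborel. (v x)^2)"
  unfolding Af_def by (simp add: power2_eq_square)

lemma stepF:
  assumes s: "s > 0"
  shows "(LINT y|lborel. v y * (sqrt (2 * pi) / s * gauss ((x - y) / s))) =
     sqrt (2 * pi) * (LINT u|lborel. v (x - s * u) * gauss u)"
proof -
  let ?f = "\<lambda>y. v y * (sqrt (2 * pi) / s * gauss ((x - y) / s))"
  have "integral\<^sup>L lborel ?f = \<bar>- s\<bar> *\<^sub>R (LINT u|lborel. ?f (x + (- s) * u))"
    using lborel_integral_real_affine[of "-s" ?f x] s by simp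
  also have "(LINT u|lborel. ?f (x + (- s) * u)) = (LINT u|lborel. (sqrt (2 * pi) / s) * (v (x - s * u) * gauss u))"
    using s by (intro Bochner_Integration.integral_cong refl) (simp add: algebra_simps)
  also have "\<dots> = (sqrt (2 * pi) / s) * (LINT u|lborel. v (x - s * u) * gauss u)" by simp
  finally show ?thesis using s by simp
qed

lemma stepF2:
  assumes s: "s > 0"
  shows "(LINT x|lborel. v x * (sqrt (2 * pi) * (LINT u|lborel. v (x - s * u) * gauss u))) =
     sqrt (2 * pi) * (LINT u|lborel. gauss u * Af (s * u))"
proof -
  define V where "V = (LINT x|lborel. (v x)^2)"
  have int: "integrable (lborel \<Otimes>\<^sub>M lborel) (\<lambda>(u, x). v x * (v (x - s * u) * gauss u))"
  proof -
    have "integrable (lborel \<Otimes>\<^sub>M lborel) (\<lambda>z. v (snd z) * (v (snd z - s * fst z) * gauss (fst z)))"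
    proof (rule lborel_pair.Fubini_integrable)
      show "(\<lambda>z. v (snd z) * (v (snd z - s * fst z) * gauss (fst z))) \<in> borel_measurable (lborel \<Otimes>\<^sub>M lborel)"
        by measurable
      show "integrable lborel (\<lambda>u. LINT x|lborel. norm (v (snd (u, x)) * (v (snd (u, x) - s * fst (u, x)) * gauss (fst (u, x)))))"
      proof (rule Bochner_Integration.integrable_bound[where f="\<lambda>u. V * gauss u"])
        show "integrable lborel (\<lambda>u. V * gauss u)" using gauss_integrable by simp
        show "(\<lambda>u. LINT x|lborel. norm (v (snd (u, x)) * (v (snd (u, x) - s * fst (u, x)) * gauss (fst (u, x)))))
            \<in> borel_measurable lborel" by measurable
        show "AE u in lborel. norm (LINT x|lborel. norm (v (snd (u, x)) * (v (snd (u, x) - s * fst (u, x)) * gauss (fst (u, x)))))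
            \<le> norm (V * gauss u)"
        proof (rule AE_I2)
          fix u
          have "(LINT x|lborel. norm (v (snd (u, x)) * (v (snd (u, x) - s * fst (u, x)) * gauss (fst (u, x)))))
              = gauss u * (LINT x|lborel. \<bar>v x * v (x - s * u)\<bar>)"
            using gauss_pos[of u] by (simp add: abs_mult mult.commute mult.left_commute)
          also have "\<dots> \<le> gauss u * V" unfolding V_def
            using gauss_pos[of u] vv_abs_bound[of "s * u"] by (intro mult_left_mono) auto
          finally have "(LINT x|lborel. norm (v (snd (u, x)) * (v (snd (u, x) - s * fst (u, x)) * gauss (fst (u, x)))))
              \<le> gauss u * V" .
          moreover have "V \<ge> 0" unfolding V_def by (simp add: integral_nonneg_AE)
          ultimately show "norm (LINT x|lborel. norm (v (snd (u, x)) * (v (snd (u, x) - s * fst (u, x)) * gauss (fst (u, x)))))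
            \<le> norm (V * gauss u)"
            using gauss_pos[of u] by (simp add: integral_nonneg_AE mult.commute)
        qed
      qed
      show "AE u in lborel. integrable lborel (\<lambda>x. v (snd (u, x)) * (v (snd (u, x) - s * fst (u, x)) * gauss (fst (u, x))))"
        using vv_int by (intro AE_I2) (simp add: mult.assoc[symmetric])
    qed
    then show ?thesis by (simp add: case_prod_beta')
  qed
  have "(LINT x|lborel. v x * (sqrt (2 * pi) * (LINT u|lborel. v (x - s * u) * gauss u))) =
      (LINT x|lborel. sqrt (2 * pi) * (v x * (LINT u|lborel. v (x - s * u) * gauss u)))"
    by (simp add: mult.left_commute)
  also have "\<dots> = sqrt (2 * pi) * (LINT x|lborel. LINT u|lborel. v x * (v (x - s * u) * gauss u))"
    by simp
  also have "(LINT x|lborel. LINT u|lborel. v x * (v (x - s * u) * gauss u)) =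
      (LINT u|lborel. LINT x|lborel. v x * (v (x - s * u) * gauss u))"
    using lborel_pair.Fubini_integral[OF int] by simp
  also have "\<dots> = (LINT u|lborel. gauss u * Af (s * u))"
    unfolding Af_def by (intro Bochner_Integration.integral_cong refl) (simp add: mult.commute mult.left_commute)
  finally show ?thesis .
qed

lemma stepT:
  assumes s: "s > 0"
  shows "(LINT p|lborel. gauss (s * p) * ((Cc p)^2 + (Ss p)^2)) =
     sqrt (2 * pi) * (LINT u|lborel. gauss u * Af (s * u))"
  unfolding stepE1[OF s] stepE2[OF s] stepF[OF s] stepF2[OF s] ..

lemma Af_isCont: "isCont Af 0"
  unfolding isCont_def LIM_eq
proof (intro allI impI)
  fix e :: real assume e: "e > 0"
  define V where "V = (LINT x|lborel. (v x)^2)"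
  have V: "V \<ge> 0" unfolding V_def by (simp add: integral_nonneg_AE)
  define eta where "eta = e^2 / (4 * (V + 1))"
  have eta: "eta > 0" unfolding eta_def using e V by auto
  obtain d where d: "d > 0" and dd: "\<And>z. \<bar>z\<bar> < d \<Longrightarrow> (LINT x|lborel. (v (x + z) - v x)^2) < eta"
    using L2_translation_continuity[OF vL2 eta] by auto
  show "\<exists>s>0. \<forall>x. x \<noteq> 0 \<and> norm (x - 0) < s \<longrightarrow> norm (Af x - Af 0) < e"
  proof (intro exI[of _ d] conjI allI impI d)
    fix z :: real assume "z \<noteq> 0 \<and> norm (z - 0) < d"
    then have z: "\<bar>-z\<bar> < d" by simp
    have dL2: "L2_fun (\<lambda>x. v (x - z) - v x)" by (rule L2_fun_diff[OF vshift(1) vL2])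
    have "Af z - Af 0 = (LINT x|lborel. v x * v (x - z) - v x * v (x - 0))"
      unfolding Af_def using vv_int[of z] vv_int[of 0] by simp
    also have "\<dots> = (LINT x|lborel. v x * (v (x - z) - v x))"
      by (simp add: right_diff_distrib)
    finally have "\<bar>Af z - Af 0\<bar> \<le> sqrt V * sqrt (LINT x|lborel. (v (x - z) - v x)^2)"
      unfolding V_def using CS_integral'[of v lborel "\<lambda>x. v (x - z) - v x"] vL2 dL2
      by (simp add: L2_fun_def)
    also have "\<dots> \<le> sqrt (V + 1) * sqrt eta"
    proof (rule mult_mono)
      show "sqrt V \<le> sqrt (V + 1)" by simp
      have "(LINT x|lborel. (v (x - z) - v x)^2) < eta" using dd[OF z] by simp
      then show "sqrt (LINT x|lborel. (v (x - z) - v x)^2) \<le> sqrt eta" by simp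
    qed (use V in auto)
    also have "\<dots> = e / 2"
    proof -
      have "sqrt (V + 1) * sqrt eta = sqrt ((V + 1) * eta)" by (simp add: real_sqrt_mult)
      also have "(V + 1) * eta = (e / 2)^2" unfolding eta_def using V by (simp add: field_simps power2_eq_square)
      finally show ?thesis using e by simp
    qed
    finally show "norm (Af z - Af 0) < e" using e by simp
  qed
qed

lemma Af_limit:
  "(\<lambda>n. LINT u|lborel. gauss u * Af (inverse (real (Suc n)) * u)) \<longlonglongrightarrow> (LINT u|lborel. gauss u * Af 0)"
proof (rule integral_dominated_convergence[where w="\<lambda>u. gauss u * (LINT x|lborel. (v x)^2)"])
  show "integrable lborel (\<lambda>u. gauss u * (LINT x|lborel. (v x)^2))" using gauss_integrable by simp
  show "AE u in lborel. (\<lambda>n. gauss u * Af (inverse (real (Suc n)) * u)) \<longlonglongrightarrow> gauss u * Af 0"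
  proof (rule AE_I2)
    fix u
    have "(\<lambda>n. inverse (real (Suc n)) * u) \<longlonglongrightarrow> 0 * u"
      by (intro tendsto_intros LIMSEQ_inverse_real_of_nat)
    then have "(\<lambda>n. Af (inverse (real (Suc n)) * u)) \<longlonglongrightarrow> Af 0"
      using isCont_tendsto_compose[OF Af_isCont] by simp
    then show "(\<lambda>n. gauss u * Af (inverse (real (Suc n)) * u)) \<longlonglongrightarrow> gauss u * Af 0"
      by (intro tendsto_intros)
  qed
  show "AE u in lborel. norm (gauss u * Af (inverse (real (Suc n)) * u)) \<le> gauss u * (LINT x|lborel. (v x)^2)" for n
    using gauss_pos Af_bound by (intro AE_I2) (simp add: abs_mult less_imp_le mult_left_mono)
qed auto

lemma gauss_mono: "\<bar>a\<bar> \<le> \<bar>b\<bar> \<Longrightarrow> gauss b \<le> gauss a"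
  unfolding gauss_def by (simp add: abs_le_square_iff)

lemma plancherel_core:
  "integrable lborel (\<lambda>p. (Cc p)^2 + (Ss p)^2)"
  "(LINT p|lborel. (Cc p)^2 + (Ss p)^2) = 2 * pi * (LINT x|lborel. (v x)^2)"
proof -
  define sn where "sn n = inverse (real (Suc n))" for n :: nat
  have sn: "sn n > 0" for n unfolding sn_def by simp
  define V where "V = (LINT x|lborel. (v x)^2)"
  let ?Q = "\<lambda>p. (Cc p)^2 + (Ss p)^2"
  have Qnn: "?Q p \<ge> 0" for p by simp
  have Qb: "?Q p \<le> 2 * N1^2" for p
  proof -
    have "(Cc p)^2 \<le> N1^2" using Cc_bound[of p] by (metis abs_ge_zero power2_abs power_mono)
    moreover have "(Ss p)^2 \<le> N1^2" using Ss_bound[of p] by (metis abs_ge_zero power2_abs power_mono)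
    ultimately show ?thesis by simp
  qed
  have "True"
  proof -
    show ?thesis by simp
  qed
  have intn: "integrable lborel (\<lambda>p. gauss (sn n * p) * ?Q p)" for n
  proof (rule Bochner_Integration.integrable_bound[where f="\<lambda>p. 2 * N1^2 * gauss (sn n * p)"])
    show "integrable lborel (\<lambda>p. 2 * N1^2 * gauss (sn n * p))" using gauss_s_int[OF sn] by simp
    show "AE p in lborel. norm (gauss (sn n * p) * ?Q p) \<le> norm (2 * N1^2 * gauss (sn n * p))"
      using Qb gauss_pos by (intro AE_I2) (simp add: abs_mult less_imp_le mult.commute mult_left_mono)
  qed measurable
  have lim1: "(\<lambda>n. \<integral>\<^sup>+ p. ennreal (gauss (sn n * p) * ?Q p) \<partial>lborel) \<longlonglongrightarrow> (\<integral>\<^sup>+ p. ennreal (?Q p) \<partial>lborel)"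
  proof (rule nn_integral_LIMSEQ)
    show "incseq (\<lambda>n p. ennreal (gauss (sn n * p) * ?Q p))"
    proof (intro incseq_SucI le_funI ennreal_leI mult_right_mono Qnn gauss_mono)
      fix n p
      have "sn (Suc n) \<le> sn n" unfolding sn_def by (simp add: field_simps)
      then show "\<bar>sn (Suc n) * p\<bar> \<le> \<bar>sn n * p\<bar>" using sn[of "Suc n"] by (simp add: abs_mult mult_right_mono)
    qed
    fix p
    have "(\<lambda>n. sn n * p) \<longlonglongrightarrow> 0 * p" unfolding sn_def by (intro tendsto_intros LIMSEQ_inverse_real_of_nat)
    moreover have "isCont gauss 0" unfolding gauss_def by (intro continuous_intros) auto
    ultimately have "(\<lambda>n. gauss (sn n * p)) \<longlonglongrightarrow> gauss 0"
      using isCont_tendsto_compose[of 0 gauss] by simp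
    then have "(\<lambda>n. gauss (sn n * p) * ?Q p) \<longlonglongrightarrow> gauss 0 * ?Q p" by (rule tendsto_mult_right)
    from tendsto_ennrealI[OF this]
    show "(\<lambda>n. ennreal (gauss (sn n * p) * ?Q p)) \<longlonglongrightarrow> ennreal (?Q p)"
      unfolding gauss_def by simp
  qed measurable
  have "(\<lambda>n. \<integral>\<^sup>+ p. ennreal (gauss (sn n * p) * ?Q p) \<partial>lborel) =
      (\<lambda>n. ennreal (sqrt (2 * pi) * (LINT u|lborel. gauss u * Af (inverse (real (Suc n)) * u))))"
  proof
    fix n
    have "(\<integral>\<^sup>+ p. ennreal (gauss (sn n * p) * ?Q p) \<partial>lborel) = ennreal (LINT p|lborel. gauss (sn n * p) * ?Q p)"
      using intn gauss_pos by (intro nn_integral_eq_integral) (auto intro!: AE_I2 simp: less_imp_le)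
    also have "\<dots> = ennreal (sqrt (2 * pi) * (LINT u|lborel. gauss u * Af (inverse (real (Suc n)) * u)))"
      using stepT[OF sn[of n]] unfolding sn_def by simp
    finally show "(\<integral>\<^sup>+ p. ennreal (gauss (sn n * p) * ?Q p) \<partial>lborel) =
      ennreal (sqrt (2 * pi) * (LINT u|lborel. gauss u * Af (inverse (real (Suc n)) * u)))" .
  qed
  moreover have "(\<lambda>n. ennreal (sqrt (2 * pi) * (LINT u|lborel. gauss u * Af (inverse (real (Suc n)) * u))))
      \<longlonglongrightarrow> ennreal (sqrt (2 * pi) * (LINT u|lborel. gauss u * Af 0))"
    by (intro tendsto_ennrealI tendsto_intros Af_limit)
  ultimately have lim2: "(\<lambda>n. \<integral>\<^sup>+ p. ennreal (gauss (sn n * p) * ?Q p) \<partial>lborel) \<longlonglongrightarrow>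
      ennreal (sqrt (2 * pi) * (LINT u|lborel. gauss u * Af 0))" by simp
  have val: "sqrt (2 * pi) * (LINT u|lborel. gauss u * Af 0) = 2 * pi * V"
    using gauss_integral unfolding Af0 V_def by (simp add: mult.assoc[symmetric])
  have nn: "(\<integral>\<^sup>+ p. ennreal (?Q p) \<partial>lborel) = ennreal (2 * pi * V)"
    using LIMSEQ_unique[OF lim1 lim2] val by simp
  show int: "integrable lborel ?Q"
  proof (rule integrableI_nonneg)
    show "(\<integral>\<^sup>+ p. ennreal (?Q p) \<partial>lborel) < \<infinity>" unfolding nn by simp
  qed auto
  have "ennreal (LINT p|lborel. ?Q p) = ennreal (2 * pi * V)"
    using nn_integral_eq_integral[OF int] nn by simp
  moreover have "(LINT p|lborel. ?Q p) \<ge> 0" by (simp add: integral_nonneg_AE)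
  moreover have "2 * pi * V \<ge> 0" unfolding V_def by (simp add: integral_nonneg_AE)
  ultimately show "(LINT p|lborel. ?Q p) = 2 * pi * (LINT x|lborel. (v x)^2)"
    unfolding V_def by simp
qed

end


definition TR :: "(real \<Rightarrow> real) \<Rightarrow> real \<Rightarrow> real \<Rightarrow> complex" where
  "TR w R p = complex_of_real (1 / sqrt (2*pi)) *
        (LINT x|lborel. indicator {-R..R} x * (complex_of_real (w x) * cis (-(p*x))))"

lemma fourier_L2_TR: "fourier_L2 w \<phi> \<longleftrightarrow> \<phi> \<in> borel_measurable lborel \<and> integrable lborel (\<lambda>p. (cmod (\<phi> p))^2) \<and>
      ((\<lambda>R. LINT p|lborel. (cmod (\<phi> p - TR w R p))^2) \<longlongrightarrow> 0) at_top"
  unfolding fourier_L2_def TR_def ..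

context
  fixes w :: "real \<Rightarrow> real"
  assumes wL2: "L2_fun w"
begin

lemma wm[measurable]: "w \<in> borel_measurable borel" using wL2 by (simp add: L2_fun_def)
lemma w2: "integrable lborel (\<lambda>x. (w x)^2)" using wL2 by (simp add: L2_fun_def)

definition "vR R x = indicator {-R..R} x * w x"

lemma vR_meas[measurable]: "vR R \<in> borel_measurable borel" unfolding vR_def[abs_def] by measurable

lemma vR_int: "integrable lborel (vR R)"
proof (rule Bochner_Integration.integrable_bound[where f="\<lambda>x. indicator {-R..R} x + (w x)^2"])
  show "integrable lborel (\<lambda>x. indicator {-R..R} x + (w x)^2 :: real)" using int_ind_Icc w2 by simp
  show "AE x in lborel. norm (vR R x) \<le> norm (indicator {-R..R} x + (w x)^2 :: real)"
  proof (rule AE_I2)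
    fix x
    have "\<bar>w x\<bar> \<le> 1 + (w x)^2"
    proof (cases "\<bar>w x\<bar> \<le> 1")
      case True then show ?thesis by (simp add: add_increasing2)
    next
      case False
      then have "\<bar>w x\<bar> * 1 \<le> \<bar>w x\<bar> * \<bar>w x\<bar>" by (intro mult_left_mono) auto
      then have "\<bar>w x\<bar> \<le> \<bar>w x\<bar> * \<bar>w x\<bar>" by simp
      also have "\<bar>w x\<bar> * \<bar>w x\<bar> = (w x)^2" by (simp add: power2_eq_square)
      finally show ?thesis by simp
    qed
    then show "norm (vR R x) \<le> norm (indicator {-R..R} x + (w x)^2 :: real)"
      unfolding vR_def by (auto simp: indicator_def abs_mult)
  qed
qed measurable

lemma vR_sq_le: "(vR R x)^2 \<le> (w x)^2" unfolding vR_def by (simp add: indicator_def)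

lemma vR2: "integrable lborel (\<lambda>x. (vR R x)^2)"
  by (rule Bochner_Integration.integrable_bound[OF w2]) (auto intro!: AE_I2 simp: vR_sq_le)

lemma TR_eq: "TR w R p = complex_of_real (1 / sqrt (2*pi)) * Fv (vR R) p"
proof -
  have "(LINT x|lborel. indicator {-R..R} x * (complex_of_real (w x) * cis (-(p*x)))) =
      (LINT x|lborel. complex_of_real (vR R x) * cis (-(p*x)))"
    unfolding vR_def by (intro Bochner_Integration.integral_cong refl) (auto simp: indicator_def)
  then show ?thesis unfolding TR_def Fv_def[OF vR_meas vR_int vR2] by simp
qed

lemma TR_meas[measurable]: "TR w R \<in> borel_measurable borel"
proof -
  have "TR w R = (\<lambda>p. complex_of_real (1 / sqrt (2*pi)) * Fv (vR R) p)" using TR_eq by auto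
  then show ?thesis using Fv_meas[OF vR_meas vR_int vR2] by simp
qed

lemma TR_cmod: "(cmod (TR w R p))^2 = ((Cc (vR R) p)^2 + (Ss (vR R) p)^2) / (2 * pi)"
proof -
  have c: "(cmod (complex_of_real (1 / sqrt (2*pi))))^2 = 1 / (2 * pi)"
    by (simp only: norm_of_real) (simp add: power_divide)
  show ?thesis
    unfolding TR_eq norm_mult power_mult_distrib Fv_cmod[OF vR_meas vR_int vR2] c by simp
qed

lemma TR_L2: "integrable lborel (\<lambda>p. (cmod (TR w R p))^2)"
  "(LINT p|lborel. (cmod (TR w R p))^2) = (LINT x|lborel. (vR R x)^2)"
proof -
  note pc = plancherel_core[OF vR_meas vR_int vR2, of R]
  show "integrable lborel (\<lambda>p. (cmod (TR w R p))^2)" unfolding TR_cmod using pc(1) by simp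
  show "(LINT p|lborel. (cmod (TR w R p))^2) = (LINT x|lborel. (vR R x)^2)"
    unfolding TR_cmod using pc(2) by simp
qed

lemma vR_limit: "((\<lambda>R. LINT x|lborel. (vR R x)^2) \<longlongrightarrow> (LINT x|lborel. (w x)^2)) at_top"
proof (rule integral_dominated_convergence_at_top[where w="\<lambda>x. (w x)^2"])
  show "integrable lborel (\<lambda>x. (w x)^2)" by (rule w2)
  show "AE x in lborel. ((\<lambda>R. (vR R x)^2) \<longlongrightarrow> (w x)^2) at_top"
  proof (rule AE_I2)
    fix x
    have "eventually (\<lambda>R. (vR R x)^2 = (w x)^2) at_top"
      using eventually_ge_at_top[of "\<bar>x\<bar>"] by eventually_elim (auto simp: vR_def indicator_def)
    then show "((\<lambda>R. (vR R x)^2) \<longlongrightarrow> (w x)^2) at_top" by (rule tendsto_eventually)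
  qed
  show "\<forall>\<^sub>F R in at_top. AE x in lborel. norm ((vR R x)^2) \<le> (w x)^2"
    by (intro always_eventually allI AE_I2) (simp add: vR_sq_le)
qed auto

lemma plancherel:
  assumes "fourier_L2 w \<phi>"
  shows "(LINT p|lborel. (cmod (\<phi> p))^2) = (LINT x|lborel. (w x)^2)"
proof -
  have phm[measurable]: "\<phi> \<in> borel_measurable borel" and phi2: "integrable lborel (\<lambda>p. (cmod (\<phi> p))^2)"
    and lim: "((\<lambda>R. LINT p|lborel. (cmod (\<phi> p - TR w R p))^2) \<longlongrightarrow> 0) at_top"
    using assms unfolding fourier_L2_TR by auto
  define a where "a R = sqrt (LINT p|lborel. (cmod (TR w R p))^2)" for R
  define b where "b = sqrt (LINT p|lborel. (cmod (\<phi> p))^2)"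
  define d where "d R = sqrt (LINT p|lborel. (cmod (\<phi> p - TR w R p))^2)" for R
  have d0: "(d \<longlongrightarrow> 0) at_top" unfolding d_def using tendsto_real_sqrt[OF lim] by simp
  have dint: "integrable lborel (\<lambda>p. (cmod (\<phi> p - TR w R p))^2)" for R
  proof (rule Bochner_Integration.integrable_bound[where f="\<lambda>p. 2 * (cmod (\<phi> p))^2 + 2 * (cmod (TR w R p))^2"])
    show "integrable lborel (\<lambda>p. 2 * (cmod (\<phi> p))^2 + 2 * (cmod (TR w R p))^2)"
      using phi2 TR_L2(1)[of R] by simp
    show "AE p in lborel. norm ((cmod (\<phi> p - TR w R p))^2) \<le> norm (2 * (cmod (\<phi> p))^2 + 2 * (cmod (TR w R p))^2)"
    proof (rule AE_I2)
      fix p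
      have "cmod (\<phi> p - TR w R p) \<le> cmod (\<phi> p) + cmod (TR w R p)" by (rule norm_triangle_ineq4)
      then have "(cmod (\<phi> p - TR w R p))^2 \<le> (cmod (\<phi> p) + cmod (TR w R p))^2" by (simp add: power_mono)
      also have "\<dots> \<le> 2 * (cmod (\<phi> p))^2 + 2 * (cmod (TR w R p))^2" by (rule sq_sum2_le)
      finally show "norm ((cmod (\<phi> p - TR w R p))^2) \<le> norm (2 * (cmod (\<phi> p))^2 + 2 * (cmod (TR w R p))^2)"
        by simp
    qed
  qed measurable
  have tri: "sqrt (LINT p|lborel. (cmod (f p))^2) \<le> sqrt (LINT p|lborel. (cmod (g p))^2) + sqrt (LINT p|lborel. (cmod (f p - g p))^2)"
    if fm: "f \<in> borel_measurable borel" and gm: "g \<in> borel_measurable borel"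
      and fi: "integrable lborel (\<lambda>p. (cmod (f p))^2)" and gi: "integrable lborel (\<lambda>p. (cmod (g p))^2)"
      and fgi: "integrable lborel (\<lambda>p. (cmod (f p - g p))^2)" for f g :: "real \<Rightarrow> complex"
  proof -
    have [measurable]: "f \<in> borel_measurable borel" "g \<in> borel_measurable borel" using fm gm by auto
    have M: "sqrt (LINT p|lborel. (cmod (g p) + cmod (f p - g p))^2) \<le>
        sqrt (LINT p|lborel. (cmod (g p))^2) + sqrt (LINT p|lborel. (cmod (f p - g p))^2)"
      and Mi: "integrable lborel (\<lambda>p. (cmod (g p) + cmod (f p - g p))^2)"
      using Minkowski_integral[of "\<lambda>p. cmod (g p)" lborel "\<lambda>p. cmod (f p - g p)"] gi fgi by auto
    have "(LINT p|lborel. (cmod (f p))^2) \<le> (LINT p|lborel. (cmod (g p) + cmod (f p - g p))^2)"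
    proof (rule integral_mono[OF fi Mi])
      fix p
      have "cmod (f p) \<le> cmod (g p) + cmod (f p - g p)" using norm_triangle_ineq[of "g p" "f p - g p"] by simp
      then show "(cmod (f p))^2 \<le> (cmod (g p) + cmod (f p - g p))^2" by (simp add: power_mono)
    qed
    then have "sqrt (LINT p|lborel. (cmod (f p))^2) \<le> sqrt (LINT p|lborel. (cmod (g p) + cmod (f p - g p))^2)"
      by simp
    with M show ?thesis by linarith
  qed
  have ab: "\<bar>a R - b\<bar> \<le> d R" for R
  proof -
    have "b \<le> a R + d R" unfolding a_def b_def d_def
      using tri[of \<phi> "TR w R"] phi2 TR_L2(1)[of R] dint[of R] by simp
    moreover have "a R \<le> b + d R" unfolding a_def b_def d_def
      using tri[of "TR w R" \<phi>] phi2 TR_L2(1)[of R] dint[of R]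
      by (simp add: norm_minus_commute)
    ultimately show ?thesis by linarith
  qed
  have "(a \<longlongrightarrow> b) at_top"
  proof (rule tendsto_sandwich[where f="\<lambda>R. b - d R" and h="\<lambda>R. b + d R"])
    show "\<forall>\<^sub>F R in at_top. b - d R \<le> a R" using ab by (intro always_eventually allI) (smt (verit))
    show "\<forall>\<^sub>F R in at_top. a R \<le> b + d R" using ab by (intro always_eventually allI) (smt (verit))
    show "((\<lambda>R. b - d R) \<longlongrightarrow> b) at_top" using tendsto_diff[OF tendsto_const d0, of b] by simp
    show "((\<lambda>R. b + d R) \<longlongrightarrow> b) at_top" using tendsto_add[OF tendsto_const d0, of b] by simp
  qed
  moreover have "(a \<longlongrightarrow> sqrt (LINT x|lborel. (w x)^2)) at_top"
    unfolding a_def TR_L2(2) by (intro tendsto_real_sqrt vR_limit)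
  ultimately have "b = sqrt (LINT x|lborel. (w x)^2)" by (rule tendsto_unique[rotated]) simp
  then show ?thesis unfolding b_def
    by (metis integral_nonneg_AE AE_I2 zero_le_power2 real_sqrt_eq_iff)
qed

end


declare wm[measurable del] vR_meas[measurable del] TR_meas[measurable del]
declare Cc_meas[measurable del] Ss_meas[measurable del] Fv_meas[measurable del] Af_meas[measurable del]

lemma cmod_diff_sq_int:
  fixes f g :: "real \<Rightarrow> complex"
  assumes [measurable]: "f \<in> borel_measurable borel" "g \<in> borel_measurable borel"
    and fi: "integrable lborel (\<lambda>p. (cmod (f p))^2)" and gi: "integrable lborel (\<lambda>p. (cmod (g p))^2)"
  shows "integrable lborel (\<lambda>p. (cmod (f p - g p))^2)"
proof (rule Bochner_Integration.integrable_bound[where f="\<lambda>p. 2 * (cmod (f p))^2 + 2 * (cmod (g p))^2"])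
  show "integrable lborel (\<lambda>p. 2 * (cmod (f p))^2 + 2 * (cmod (g p))^2)" using fi gi by simp
  show "AE p in lborel. norm ((cmod (f p - g p))^2) \<le> norm (2 * (cmod (f p))^2 + 2 * (cmod (g p))^2)"
  proof (rule AE_I2)
    fix p
    have "cmod (f p - g p) \<le> cmod (f p) + cmod (g p)" by (rule norm_triangle_ineq4)
    then have "(cmod (f p - g p))^2 \<le> (cmod (f p) + cmod (g p))^2" by (simp add: power_mono)
    also have "\<dots> \<le> 2 * (cmod (f p))^2 + 2 * (cmod (g p))^2" by (rule sq_sum2_le)
    finally show "norm ((cmod (f p - g p))^2) \<le> norm (2 * (cmod (f p))^2 + 2 * (cmod (g p))^2)" by simp
  qed
qed measurable

lemma TR_integrand_int:
  assumes "L2_fun w"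
  shows "complex_integrable lborel (\<lambda>x. indicator {-R..R} x * (complex_of_real (w x) * cis (-(p*x))))"
proof -
  have [measurable]: "w \<in> borel_measurable borel" using assms by (simp add: L2_fun_def)
  show ?thesis
  proof (rule Bochner_Integration.integrable_bound[OF vR_int[OF assms, of R]])
    show "AE x in lborel. norm (indicator {-R..R} x * (complex_of_real (w x) * cis (-(p*x)))) \<le> norm (vR w R x)"
      by (intro AE_I2) (simp add: vR_def[OF assms] indicator_def norm_mult)
    show "(\<lambda>x. indicator {-R..R} x * (complex_of_real (w x) * cis (-(p*x)))) \<in> borel_measurable lborel"
      by measurable
  qed
qed

lemma TR_diff:
  assumes "L2_fun w1" "L2_fun w2"
  shows "TR (\<lambda>x. w1 x - w2 x) R p = TR w1 R p - TR w2 R p"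
proof -
  have eq: "(LINT x|lborel. indicator {-R..R} x * (complex_of_real (w1 x - w2 x) * cis (-(p*x)))) =
      (LINT x|lborel. indicator {-R..R} x * (complex_of_real (w1 x) * cis (-(p*x))) -
          indicator {-R..R} x * (complex_of_real (w2 x) * cis (-(p*x))))"
    by (intro Bochner_Integration.integral_cong refl) (simp add: algebra_simps)
  have eq2: "(LINT x|lborel. indicator {-R..R} x * (complex_of_real (w1 x) * cis (-(p*x))) -
          indicator {-R..R} x * (complex_of_real (w2 x) * cis (-(p*x)))) = (LINT x|lborel. indicator {-R..R} x * (complex_of_real (w1 x) * cis (-(p*x)))) -
      (LINT x|lborel. indicator {-R..R} x * (complex_of_real (w2 x) * cis (-(p*x))))"
    using TR_integrand_int[OF assms(1)] TR_integrand_int[OF assms(2)] by (rule Bochner_Integration.integral_diff)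
  show ?thesis unfolding TR_def eq eq2 by (simp only: right_diff_distrib)
qed

lemma fourier_L2_diff:
  assumes w1: "L2_fun w1" and w2: "L2_fun w2" and f1: "fourier_L2 w1 \<phi>1" and f2: "fourier_L2 w2 \<phi>2"
  shows "fourier_L2 (\<lambda>x. w1 x - w2 x) (\<lambda>p. \<phi>1 p - \<phi>2 p)"
proof -
  have m1[measurable]: "\<phi>1 \<in> borel_measurable borel" and i1: "integrable lborel (\<lambda>p. (cmod (\<phi>1 p))^2)"
    and l1: "((\<lambda>R. LINT p|lborel. (cmod (\<phi>1 p - TR w1 R p))^2) \<longlongrightarrow> 0) at_top"
    using f1 unfolding fourier_L2_TR by auto
  have m2[measurable]: "\<phi>2 \<in> borel_measurable borel" and i2: "integrable lborel (\<lambda>p. (cmod (\<phi>2 p))^2)"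
    and l2: "((\<lambda>R. LINT p|lborel. (cmod (\<phi>2 p - TR w2 R p))^2) \<longlongrightarrow> 0) at_top"
    using f2 unfolding fourier_L2_TR by auto
  have t1[measurable]: "TR w1 R \<in> borel_measurable borel" for R using TR_meas[OF w1] .
  have t2[measurable]: "TR w2 R \<in> borel_measurable borel" for R using TR_meas[OF w2] .
  have d1: "integrable lborel (\<lambda>p. (cmod (\<phi>1 p - TR w1 R p))^2)" for R
    using cmod_diff_sq_int[OF m1 t1 i1 TR_L2(1)[OF w1]] .
  have d2: "integrable lborel (\<lambda>p. (cmod (\<phi>2 p - TR w2 R p))^2)" for R
    using cmod_diff_sq_int[OF m2 t2 i2 TR_L2(1)[OF w2]] .
  have lim: "((\<lambda>R. LINT p|lborel. (cmod ((\<phi>1 p - \<phi>2 p) - TR (\<lambda>x. w1 x - w2 x) R p))^2) \<longlongrightarrow> 0) at_top"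
  proof (rule tendsto_sandwich[where f="\<lambda>R. 0" and h="\<lambda>R. 2 * (LINT p|lborel. (cmod (\<phi>1 p - TR w1 R p))^2)
        + 2 * (LINT p|lborel. (cmod (\<phi>2 p - TR w2 R p))^2)"])
    show "\<forall>\<^sub>F R in at_top. 0 \<le> (LINT p|lborel. (cmod ((\<phi>1 p - \<phi>2 p) - TR (\<lambda>x. w1 x - w2 x) R p))^2)"
      by (intro always_eventually allI integral_nonneg_AE AE_I2) simp
    show "\<forall>\<^sub>F R in at_top. (LINT p|lborel. (cmod ((\<phi>1 p - \<phi>2 p) - TR (\<lambda>x. w1 x - w2 x) R p))^2)
        \<le> 2 * (LINT p|lborel. (cmod (\<phi>1 p - TR w1 R p))^2) + 2 * (LINT p|lborel. (cmod (\<phi>2 p - TR w2 R p))^2)"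
    proof (intro always_eventually allI)
      fix R
      have e: "(\<phi>1 p - \<phi>2 p) - TR (\<lambda>x. w1 x - w2 x) R p = (\<phi>1 p - TR w1 R p) - (\<phi>2 p - TR w2 R p)" for p
        unfolding TR_diff[OF w1 w2] by simp
      have "(LINT p|lborel. (cmod ((\<phi>1 p - \<phi>2 p) - TR (\<lambda>x. w1 x - w2 x) R p))^2) \<le>
          (LINT p|lborel. 2 * (cmod (\<phi>1 p - TR w1 R p))^2 + 2 * (cmod (\<phi>2 p - TR w2 R p))^2)"
      proof (rule integral_mono)
        show "integrable lborel (\<lambda>p. (cmod ((\<phi>1 p - \<phi>2 p) - TR (\<lambda>x. w1 x - w2 x) R p))^2)"
          unfolding e by (rule cmod_diff_sq_int) (use d1 d2 in auto)
        show "integrable lborel (\<lambda>p. 2 * (cmod (\<phi>1 p - TR w1 R p))^2 + 2 * (cmod (\<phi>2 p - TR w2 R p))^2)"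
          using d1 d2 by simp
        fix p
        have "cmod ((\<phi>1 p - TR w1 R p) - (\<phi>2 p - TR w2 R p)) \<le> cmod (\<phi>1 p - TR w1 R p) + cmod (\<phi>2 p - TR w2 R p)"
          by (rule norm_triangle_ineq4)
        then have "(cmod ((\<phi>1 p - TR w1 R p) - (\<phi>2 p - TR w2 R p)))^2 \<le> (cmod (\<phi>1 p - TR w1 R p) + cmod (\<phi>2 p - TR w2 R p))^2"
          by (simp add: power_mono)
        also have "\<dots> \<le> 2 * (cmod (\<phi>1 p - TR w1 R p))^2 + 2 * (cmod (\<phi>2 p - TR w2 R p))^2" by (rule sq_sum2_le)
        finally show "(cmod ((\<phi>1 p - \<phi>2 p) - TR (\<lambda>x. w1 x - w2 x) R p))^2 \<le>
            2 * (cmod (\<phi>1 p - TR w1 R p))^2 + 2 * (cmod (\<phi>2 p - TR w2 R p))^2" unfolding e .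
      qed
      also have "\<dots> = 2 * (LINT p|lborel. (cmod (\<phi>1 p - TR w1 R p))^2) + 2 * (LINT p|lborel. (cmod (\<phi>2 p - TR w2 R p))^2)"
        using d1 d2 by simp
      finally show "(LINT p|lborel. (cmod ((\<phi>1 p - \<phi>2 p) - TR (\<lambda>x. w1 x - w2 x) R p))^2)
        \<le> 2 * (LINT p|lborel. (cmod (\<phi>1 p - TR w1 R p))^2) + 2 * (LINT p|lborel. (cmod (\<phi>2 p - TR w2 R p))^2)" .
    qed
    show "((\<lambda>R. 2 * (LINT p|lborel. (cmod (\<phi>1 p - TR w1 R p))^2) + 2 * (LINT p|lborel. (cmod (\<phi>2 p - TR w2 R p))^2))
        \<longlongrightarrow> 0) at_top"
      using tendsto_add[OF tendsto_mult[OF tendsto_const l1] tendsto_mult[OF tendsto_const l2], of 2 2] by simp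
  qed simp
  show ?thesis unfolding fourier_L2_TR
    using lim cmod_diff_sq_int[OF m1 m2 i1 i2] by auto
qed

lemma L_eq_diff:
  assumes "L_eq a b w1 h1" "L_eq a b w2 h2"
  shows "L_eq a b (\<lambda>x. w1 x - w2 x) (\<lambda>x. h1 x - h2 x)"
proof -
  obtain wh1 hh1 where A1: "L2_fun w1" "L2_fun h1" "fourier_L2 w1 wh1" "fourier_L2 h1 hh1"
      "AE p in lborel. lambda_sym a b p * wh1 p = hh1 p"
    using assms(1) unfolding L_eq_def by auto
  obtain wh2 hh2 where A2: "L2_fun w2" "L2_fun h2" "fourier_L2 w2 wh2" "fourier_L2 h2 hh2"
      "AE p in lborel. lambda_sym a b p * wh2 p = hh2 p"
    using assms(2) unfolding L_eq_def by auto
  have "AE p in lborel. lambda_sym a b p * (wh1 p - wh2 p) = hh1 p - hh2 p"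
    using A1(5) A2(5) by eventually_elim (simp add: right_diff_distrib)
  then show ?thesis unfolding L_eq_def
    using L2_fun_diff[OF A1(1) A2(1)] L2_fun_diff[OF A1(2) A2(2)]
      fourier_L2_diff[OF A1(1) A2(1) A1(3) A2(3)] fourier_L2_diff[OF A1(2) A2(2) A1(4) A2(4)] by blast
qed

lemma AE_not_0: "AE p in lborel. p \<noteq> (0::real)"
  by (rule AE_lborel_singleton)

lemma L_inv:
  assumes L: "L_eq a b w h" and C: "C > 0" and Cb: "\<forall>p. p \<noteq> 0 \<longrightarrow> cmod (lambda_sym a b p) \<ge> C"
  shows "C^2 * (LINT x|lborel. (w x)^2) \<le> (LINT x|lborel. (h x)^2)"
proof -
  obtain wh hh where A: "L2_fun w" "L2_fun h" "fourier_L2 w wh" "fourier_L2 h hh"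
      "AE p in lborel. lambda_sym a b p * wh p = hh p"
    using L unfolding L_eq_def by auto
  have iw: "integrable lborel (\<lambda>p. (cmod (wh p))^2)" and ih: "integrable lborel (\<lambda>p. (cmod (hh p))^2)"
    using A(3,4) unfolding fourier_L2_def by auto
  have "AE p in lborel. C^2 * (cmod (wh p))^2 \<le> (cmod (hh p))^2"
    using A(5) AE_not_0
  proof eventually_elim
    fix p assume e: "lambda_sym a b p * wh p = hh p" and p: "p \<noteq> 0"
    have "C^2 \<le> (cmod (lambda_sym a b p))^2" using Cb p C by (simp add: power_mono less_imp_le)
    then have "C^2 * (cmod (wh p))^2 \<le> (cmod (lambda_sym a b p))^2 * (cmod (wh p))^2"
      by (intro mult_right_mono) auto
    also have "\<dots> = (cmod (hh p))^2" unfolding e[symmetric] by (simp add: norm_mult power_mult_distrib)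
    finally show "C^2 * (cmod (wh p))^2 \<le> (cmod (hh p))^2" .
  qed
  then have "(LINT p|lborel. C^2 * (cmod (wh p))^2) \<le> (LINT p|lborel. (cmod (hh p))^2)"
    using iw ih by (intro integral_mono_AE) auto
  then show ?thesis
    unfolding plancherel[OF A(1,3), symmetric] plancherel[OF A(2,4), symmetric] by simp
qed

lemma L_strict:
  assumes L: "L_eq a b w h" and C: "C > 0" and Cb: "\<forall>p. p \<noteq> 0 \<longrightarrow> cmod (lambda_sym a b p) \<ge> C"
    and lev: "AE p in lborel. cmod (lambda_sym a b p) \<noteq> C"
    and ge: "(LINT x|lborel. (h x)^2) \<le> C^2 * (LINT x|lborel. (w x)^2)"
  shows "(LINT x|lborel. (w x)^2) = 0"
proof -
  obtain wh hh where A: "L2_fun w" "L2_fun h" "fourier_L2 w wh" "fourier_L2 h hh"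
      "AE p in lborel. lambda_sym a b p * wh p = hh p"
    using L unfolding L_eq_def by auto
  have iw: "integrable lborel (\<lambda>p. (cmod (wh p))^2)" and ih: "integrable lborel (\<lambda>p. (cmod (hh p))^2)"
    using A(3,4) unfolding fourier_L2_def by auto
  define D where "D p = (cmod (hh p))^2 - C^2 * (cmod (wh p))^2" for p
  have Di: "integrable lborel D" unfolding D_def using iw ih by simp
  have Dnn: "AE p in lborel. 0 \<le> D p"
    using A(5) AE_not_0
  proof eventually_elim
    fix p assume e: "lambda_sym a b p * wh p = hh p" and p: "p \<noteq> 0"
    have "C^2 \<le> (cmod (lambda_sym a b p))^2" using Cb p C by (simp add: power_mono less_imp_le)
    then have "C^2 * (cmod (wh p))^2 \<le> (cmod (lambda_sym a b p))^2 * (cmod (wh p))^2"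
      by (intro mult_right_mono) auto
    also have "\<dots> = (cmod (hh p))^2" unfolding e[symmetric] by (simp add: norm_mult power_mult_distrib)
    finally show "0 \<le> D p" unfolding D_def by simp
  qed
  have "(LINT p|lborel. D p) = (LINT x|lborel. (h x)^2) - C^2 * (LINT x|lborel. (w x)^2)"
    unfolding D_def using iw ih
    by (simp add: plancherel[OF A(1,3)] plancherel[OF A(2,4)])
  then have "(LINT p|lborel. D p) \<le> 0" using ge by simp
  moreover have "(LINT p|lborel. D p) \<ge> 0" using Dnn by (rule integral_nonneg_AE)
  ultimately have "(LINT p|lborel. D p) = 0" by simp
  then have D0: "AE p in lborel. D p = 0" using integral_nonneg_eq_0_iff_AE[OF Di Dnn] by simp
  have "AE p in lborel. (cmod (wh p))^2 = 0"
    using D0 A(5) AE_not_0 lev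
  proof eventually_elim
    fix p assume d: "D p = 0" and e: "lambda_sym a b p * wh p = hh p" and p: "p \<noteq> 0"
      and l: "cmod (lambda_sym a b p) \<noteq> C"
    have gt: "cmod (lambda_sym a b p) > C" using Cb p l by force
    then have "C^2 < (cmod (lambda_sym a b p))^2" using C by (simp add: power_strict_mono)
    have "(cmod (hh p))^2 = (cmod (lambda_sym a b p))^2 * (cmod (wh p))^2"
      unfolding e[symmetric] by (simp add: norm_mult power_mult_distrib)
    then have "((cmod (lambda_sym a b p))^2 - C^2) * (cmod (wh p))^2 = 0" using d unfolding D_def
      by (simp add: algebra_simps)
    then show "(cmod (wh p))^2 = 0" using \<open>C^2 < (cmod (lambda_sym a b p))^2\<close> by simp
  qed
  then have "(LINT p|lborel. (cmod (wh p))^2) = 0" by (rule integral_eq_zero_AE)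
  then show ?thesis unfolding plancherel[OF A(1,3)] .
qed


lemma phi_deriv:
  assumes "x > 0"
  shows "((\<lambda>p. (ln p - a)^2 + b^2 * p^2) has_real_derivative (2 * (ln x - a + b^2 * x^2) / x)) (at x)"
proof -
  have "((\<lambda>p. (ln p - a)^2 + b^2 * p^2) has_real_derivative (2 * (ln x - a) * (1 / x) + b^2 * (2 * x))) (at x)"
    using assms by (auto intro!: derivative_eq_intros simp: power2_eq_square)
  moreover have "2 * (ln x - a) * (1 / x) + b^2 * (2 * x) = 2 * (ln x - a + b^2 * x^2) / x"
    using assms by (simp add: field_simps power2_eq_square)
  ultimately show ?thesis by simp
qed

lemma psi_strict: fixes x y a b :: real shows "0 < x \<Longrightarrow> x < y \<Longrightarrow> ln x - a + b^2 * x^2 < ln y - a + b^2 * y^2"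
proof -
  assume xy: "0 < x" "x < y"
  have "ln x < ln y" using xy by simp
  moreover have "x^2 \<le> y^2" using xy by (simp add: power_mono)
  then have "b^2 * x^2 \<le> b^2 * y^2" by (simp add: mult_left_mono)
  ultimately show ?thesis by simp
qed

lemma phi_finite_level: fixes a b c :: real shows "finite {p. p > 0 \<and> (ln p - a)^2 + b^2 * p^2 = c}"
proof -
  define phi where "phi p = (ln p - a)^2 + b^2 * p^2" for p :: real
  define psi where "psi p = ln p - a + b^2 * p^2" for p :: real
  define S1 where "S1 = {p. p > 0 \<and> psi p \<le> 0}"
  define S2 where "S2 = {p. p > 0 \<and> psi p \<ge> 0}"
  have dphi: "x > 0 \<Longrightarrow> (phi has_real_derivative (2 * psi x / x)) (at x)" for x
    unfolding phi_def psi_def using phi_deriv by blast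
  have inj1: "inj_on phi S1"
  proof (rule inj_onI)
    have dec: "phi y < phi x" if "x \<in> S1" "y \<in> S1" "x < y" for x y
    proof -
      have "\<exists>z>x. z < y \<and> phi y - phi x = (y - x) * (2 * psi z / z)"
      proof (rule MVT2[OF \<open>x < y\<close>])
        fix t assume "x \<le> t" "t \<le> y"
        then have "t > 0" using that unfolding S1_def by auto
        then show "(phi has_real_derivative (2 * psi t / t)) (at t)" by (rule dphi)
      qed
      then obtain z where z: "x < z" "z < y" "phi y - phi x = (y - x) * (2 * psi z / z)" by blast
      have "psi z < psi y" using psi_strict[of z y a b] z that unfolding S1_def psi_def by auto
      then have "psi z < 0" using that unfolding S1_def by auto
      moreover have "z > 0" using z that unfolding S1_def by auto
      ultimately have "2 * psi z / z < 0" by (simp add: divide_neg_pos)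
      moreover have "y - x > 0" using \<open>x < y\<close> by simp
      ultimately have "(y - x) * (2 * psi z / z) < 0" by (rule mult_pos_neg[rotated])
      then show ?thesis using z(3) by linarith
    qed
    fix x y assume "x \<in> S1" "y \<in> S1" "phi x = phi y"
    then show "x = y" using dec[of x y] dec[of y x] by (cases x y rule: linorder_cases) auto
  qed
  have inj2: "inj_on phi S2"
  proof (rule inj_onI)
    have inc: "phi x < phi y" if "x \<in> S2" "y \<in> S2" "x < y" for x y
    proof -
      have "\<exists>z>x. z < y \<and> phi y - phi x = (y - x) * (2 * psi z / z)"
      proof (rule MVT2[OF \<open>x < y\<close>])
        fix t assume "x \<le> t" "t \<le> y"
        then have "t > 0" using that unfolding S2_def by auto
        then show "(phi has_real_derivative (2 * psi t / t)) (at t)" by (rule dphi)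
      qed
      then obtain z where z: "x < z" "z < y" "phi y - phi x = (y - x) * (2 * psi z / z)" by blast
      have "psi x < psi z" using psi_strict[of x z a b] z that unfolding S2_def psi_def by auto
      then have "psi z > 0" using that unfolding S2_def by auto
      moreover have "z > 0" using z that unfolding S2_def by auto
      ultimately have "2 * psi z / z > 0" by simp
      moreover have "y - x > 0" using \<open>x < y\<close> by simp
      ultimately have "(y - x) * (2 * psi z / z) > 0" by (rule mult_pos_pos[rotated])
      then show ?thesis using z(3) by linarith
    qed
    fix x y assume "x \<in> S2" "y \<in> S2" "phi x = phi y"
    then show "x = y" using inc[of x y] inc[of y x] by (cases x y rule: linorder_cases) auto
  qed
  have "{p. p > 0 \<and> (ln p - a)^2 + b^2 * p^2 = c} \<subseteq> (phi -` {c} \<inter> S1) \<union> (phi -` {c} \<inter> S2)"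
    unfolding S1_def S2_def phi_def by auto
  moreover have "finite ((phi -` {c} \<inter> S1) \<union> (phi -` {c} \<inter> S2))"
    using finite_vimage_IntI[OF _ inj1] finite_vimage_IntI[OF _ inj2] by auto
  ultimately show ?thesis by (rule finite_subset)
qed

lemma lambda_level_null: "AE p in lborel. cmod (lambda_sym a b p) \<noteq> C"
proof -
  define Z where "Z = {p. p > 0 \<and> (ln p - a)^2 + b^2 * p^2 = C^2}"
  have fZ: "finite Z" unfolding Z_def by (rule phi_finite_level)
  have sub: "{p. cmod (lambda_sym a b p) = C} \<subseteq> {0} \<union> Z \<union> uminus ` Z"
  proof
    fix p assume "p \<in> {p. cmod (lambda_sym a b p) = C}"
    then have e: "cmod (lambda_sym a b p) = C" by simp
    show "p \<in> {0} \<union> Z \<union> uminus ` Z"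
    proof (cases "p = 0")
      case False
      have "(cmod (lambda_sym a b p))^2 = (ln (\<bar>p\<bar> / exp a))^2 + (b * p)^2"
        unfolding lambda_sym_def cmod_power2 by simp
      also have "ln (\<bar>p\<bar> / exp a) = ln \<bar>p\<bar> - a" using False by (simp add: ln_div)
      also have "(b * p)^2 = b^2 * \<bar>p\<bar>^2" by (simp add: power_mult_distrib)
      finally have "\<bar>p\<bar> \<in> Z" unfolding Z_def using False e by auto
      then show ?thesis by (cases "p > 0") (auto intro!: image_eqI[of p uminus "-p"])
    qed simp
  qed
  have "finite ({0} \<union> Z \<union> uminus ` Z)" using fZ by simp
  then have "{p. cmod (lambda_sym a b p) = C} \<in> null_sets lborel"
    using finite_subset[OF sub] finite_imp_null_set_lborel by blast
  then show ?thesis by (rule AE_not_in[THEN AE_mp]) (auto intro!: AE_I2)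
qed


lemma abs_le_1_sq: "\<bar>y::real\<bar> \<le> 1 + y^2"
proof (cases "\<bar>y\<bar> \<le> 1")
  case True then show ?thesis by (simp add: add_increasing2)
next
  case False
  then have "\<bar>y\<bar> * 1 \<le> \<bar>y\<bar> * \<bar>y\<bar>" by (intro mult_left_mono) auto
  also have "\<bar>y\<bar> * \<bar>y\<bar> = y^2" by (simp add: power2_eq_square)
  finally show ?thesis by simp
qed

context
  fixes K G :: "real \<Rightarrow> real"
  assumes Ki: "integrable lborel K" and GL2: "L2_fun G"
begin

lemma Km[measurable]: "K \<in> borel_measurable borel" using Ki by (simp add: borel_measurable_integrable)
lemma Gm[measurable]: "G \<in> borel_measurable borel" using GL2 by (simp add: L2_fun_def)
lemma G2: "integrable lborel (\<lambda>y. (G y)^2)" using GL2 by (simp add: L2_fun_def)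

definition "k1 = (LINT x|lborel. \<bar>K x\<bar>)"

lemma k1_nonneg: "k1 \<ge> 0" unfolding k1_def by simp

lemma Kref_int: "integrable lborel (\<lambda>y. \<bar>K (x - y)\<bar>)"
proof -
  have "integrable lborel (\<lambda>y. \<bar>K (x + (-1) * y)\<bar>)"
    using lborel_integrable_real_affine_iff[of "-1" "\<lambda>y. \<bar>K y\<bar>" x] Ki by simp
  then show ?thesis by simp
qed

lemma Kref_int': "integrable lborel (\<lambda>y. K (x - y))"
proof -
  have "integrable lborel (\<lambda>y. K (x + (-1) * y))"
    using lborel_integrable_real_affine_iff[of "-1" "\<lambda>y. K y" x] Ki by simp
  then show ?thesis by simp
qed

lemma Kref_integral: "(LINT y|lborel. \<bar>K (x - y)\<bar>) = k1"
proof -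
  have "(LINT y|lborel. \<bar>K y\<bar>) = \<bar>-1\<bar> *\<^sub>R (LINT y|lborel. \<bar>K (x + (-1) * y)\<bar>)"
    by (rule lborel_integral_real_affine) simp
  then show ?thesis unfolding k1_def by simp
qed

lemma Kshift_nn: "(\<integral>\<^sup>+ x. ennreal \<bar>K (x - y)\<bar> \<partial>lborel) = ennreal k1"
proof -
  have "(\<integral>\<^sup>+ x. ennreal \<bar>K x\<bar> \<partial>lborel) = ennreal \<bar>1\<bar> * (\<integral>\<^sup>+ x. ennreal \<bar>K (- y + 1 * x)\<bar> \<partial>lborel)"
    by (rule nn_integral_real_affine) auto
  moreover have "(\<integral>\<^sup>+ x. ennreal \<bar>K x\<bar> \<partial>lborel) = ennreal k1"
    unfolding k1_def using Ki by (intro nn_integral_eq_integral) auto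
  ultimately show ?thesis by simp
qed

definition "P x = (\<integral>\<^sup>+ y. ennreal (\<bar>K (x - y)\<bar> * (G y)^2) \<partial>lborel)"

lemma P_meas[measurable]: "P \<in> borel_measurable borel"
  unfolding P_def[abs_def] by measurable

lemma P_tonelli: "(\<integral>\<^sup>+ x. P x \<partial>lborel) = ennreal (k1 * (LINT y|lborel. (G y)^2))"
proof -
  have "(\<integral>\<^sup>+ x. P x \<partial>lborel) = (\<integral>\<^sup>+ x. \<integral>\<^sup>+ y. ennreal (\<bar>K (x - y)\<bar> * (G y)^2) \<partial>lborel \<partial>lborel)"
    unfolding P_def ..
  also have "\<dots> = (\<integral>\<^sup>+ y. \<integral>\<^sup>+ x. ennreal (\<bar>K (x - y)\<bar> * (G y)^2) \<partial>lborel \<partial>lborel)"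
    by (rule lborel_pair.Fubini'[symmetric]) measurable
  also have "\<dots> = (\<integral>\<^sup>+ y. ennreal ((G y)^2) * ennreal k1 \<partial>lborel)"
  proof (intro nn_integral_cong)
    fix y
    have "(\<integral>\<^sup>+ x. ennreal (\<bar>K (x - y)\<bar> * (G y)^2) \<partial>lborel) = (\<integral>\<^sup>+ x. ennreal ((G y)^2) * ennreal \<bar>K (x - y)\<bar> \<partial>lborel)"
      by (intro nn_integral_cong) (simp add: ennreal_mult' mult.commute)
    also have "\<dots> = ennreal ((G y)^2) * ennreal k1"
      by (subst nn_integral_cmult) (auto simp: Kshift_nn)
    finally show "(\<integral>\<^sup>+ x. ennreal (\<bar>K (x - y)\<bar> * (G y)^2) \<partial>lborel) = ennreal ((G y)^2) * ennreal k1" .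
  qed
  also have "\<dots> = (\<integral>\<^sup>+ y. ennreal ((G y)^2) \<partial>lborel) * ennreal k1"
    by (simp add: nn_integral_multc)
  also have "(\<integral>\<^sup>+ y. ennreal ((G y)^2) \<partial>lborel) = ennreal (LINT y|lborel. (G y)^2)"
    using G2 by (intro nn_integral_eq_integral) auto
  finally show ?thesis using k1_nonneg by (simp add: ennreal_mult' mult.commute)
qed

lemma P_AE: "AE x in lborel. P x \<noteq> \<infinity>"
  using nn_integral_PInf_AE[OF P_meas[unfolded measurable_lborel2[symmetric]]] P_tonelli by simp

lemma good_x:
  assumes Px: "P x \<noteq> \<infinity>"
  shows "integrable lborel (\<lambda>y. \<bar>K (x - y)\<bar> * (G y)^2)"
    "integrable lborel (\<lambda>y. K (x - y) * G y)"
    "(conv K G x)^2 \<le> k1 * (LINT y|lborel. \<bar>K (x - y)\<bar> * (G y)^2)"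
    "P x = ennreal (LINT y|lborel. \<bar>K (x - y)\<bar> * (G y)^2)"
proof -
  show i1: "integrable lborel (\<lambda>y. \<bar>K (x - y)\<bar> * (G y)^2)"
  proof (rule integrableI_nonneg)
    show "(\<integral>\<^sup>+ y. ennreal (\<bar>K (x - y)\<bar> * (G y)^2) \<partial>lborel) < \<infinity>" using Px unfolding P_def by (simp add: top.not_eq_extremum)
  qed auto
  show "P x = ennreal (LINT y|lborel. \<bar>K (x - y)\<bar> * (G y)^2)"
    unfolding P_def using i1 by (intro nn_integral_eq_integral) auto
  show i2: "integrable lborel (\<lambda>y. K (x - y) * G y)"
  proof (rule Bochner_Integration.integrable_bound[where f="\<lambda>y. \<bar>K (x - y)\<bar> + \<bar>K (x - y)\<bar> * (G y)^2"])
    show "integrable lborel (\<lambda>y. \<bar>K (x - y)\<bar> + \<bar>K (x - y)\<bar> * (G y)^2)" using Kref_int i1 by simp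
    show "AE y in lborel. norm (K (x - y) * G y) \<le> norm (\<bar>K (x - y)\<bar> + \<bar>K (x - y)\<bar> * (G y)^2)"
    proof (rule AE_I2)
      fix y
      have "\<bar>K (x - y)\<bar> * \<bar>G y\<bar> \<le> \<bar>K (x - y)\<bar> * (1 + (G y)^2)"
        by (intro mult_left_mono abs_le_1_sq) auto
      then show "norm (K (x - y) * G y) \<le> norm (\<bar>K (x - y)\<bar> + \<bar>K (x - y)\<bar> * (G y)^2)"
        by (simp add: abs_mult algebra_simps)
    qed
  qed measurable
  have "\<bar>conv K G x\<bar> \<le> (LINT y|lborel. \<bar>K (x - y) * G y\<bar>)"
    unfolding conv_def by (rule integral_abs_bound)
  also have "\<dots> = (LINT y|lborel. \<bar>sqrt \<bar>K (x - y)\<bar> * (sqrt \<bar>K (x - y)\<bar> * G y)\<bar>)"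
    by (intro Bochner_Integration.integral_cong refl)
       (simp add: abs_mult real_sqrt_mult[symmetric])
  also have "\<dots> \<le> sqrt (LINT y|lborel. (sqrt \<bar>K (x - y)\<bar>)^2) * sqrt (LINT y|lborel. (sqrt \<bar>K (x - y)\<bar> * G y)^2)"
    by (rule CS_integral) (use Kref_int i1 in \<open>auto simp: power_mult_distrib\<close>)
  also have "\<dots> = sqrt k1 * sqrt (LINT y|lborel. \<bar>K (x - y)\<bar> * (G y)^2)"
    using Kref_integral by (simp add: power_mult_distrib)
  finally have b: "\<bar>conv K G x\<bar> \<le> sqrt k1 * sqrt (LINT y|lborel. \<bar>K (x - y)\<bar> * (G y)^2)" .
  have "(conv K G x)^2 = \<bar>conv K G x\<bar>^2" by simp
  also have "\<dots> \<le> (sqrt k1 * sqrt (LINT y|lborel. \<bar>K (x - y)\<bar> * (G y)^2))^2"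
    using b by (intro power_mono) auto
  also have "\<dots> = k1 * (LINT y|lborel. \<bar>K (x - y)\<bar> * (G y)^2)"
    using k1_nonneg by (simp add: power_mult_distrib integral_nonneg_AE)
  finally show "(conv K G x)^2 \<le> k1 * (LINT y|lborel. \<bar>K (x - y)\<bar> * (G y)^2)" .
qed

lemma conv_meas[measurable]: "conv K G \<in> borel_measurable borel"
  unfolding conv_def[abs_def] by measurable

lemma conv_L2: "L2_fun (conv K G)" "(LINT x|lborel. (conv K G x)^2) \<le> k1^2 * (LINT y|lborel. (G y)^2)"
proof -
  have le: "(\<integral>\<^sup>+ x. ennreal ((conv K G x)^2) \<partial>lborel) \<le> (\<integral>\<^sup>+ x. ennreal k1 * P x \<partial>lborel)"
  proof (rule nn_integral_mono_AE)
    show "AE x in lborel. ennreal ((conv K G x)^2) \<le> ennreal k1 * P x"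
      using P_AE
    proof eventually_elim
      fix x assume Px: "P x \<noteq> \<infinity>"
      have "ennreal ((conv K G x)^2) \<le> ennreal (k1 * (LINT y|lborel. \<bar>K (x - y)\<bar> * (G y)^2))"
        using good_x(3)[OF Px] by (rule ennreal_leI)
      also have "\<dots> = ennreal k1 * P x" unfolding good_x(4)[OF Px] using k1_nonneg
        by (simp add: ennreal_mult)
      finally show "ennreal ((conv K G x)^2) \<le> ennreal k1 * P x" .
    qed
  qed
  also have "\<dots> = ennreal k1 * (\<integral>\<^sup>+ x. P x \<partial>lborel)" by (rule nn_integral_cmult) simp
  also have "\<dots> = ennreal (k1^2 * (LINT y|lborel. (G y)^2))"
    unfolding P_tonelli using k1_nonneg
    by (simp add: ennreal_mult[symmetric] power2_eq_square mult.assoc integral_nonneg_AE)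
  finally have le2: "(\<integral>\<^sup>+ x. ennreal ((conv K G x)^2) \<partial>lborel) \<le> ennreal (k1^2 * (LINT y|lborel. (G y)^2))" .
  have int: "integrable lborel (\<lambda>x. (conv K G x)^2)"
  proof (rule integrableI_nonneg)
    show "(\<integral>\<^sup>+ x. ennreal ((conv K G x)^2) \<partial>lborel) < \<infinity>"
      using le2 by (simp add: le_less_trans)
  qed auto
  then show "L2_fun (conv K G)" unfolding L2_fun_def by simp
  have "ennreal (LINT x|lborel. (conv K G x)^2) \<le> ennreal (k1^2 * (LINT y|lborel. (G y)^2))"
    using le2 nn_integral_eq_integral[OF int] by simp
  then show "(LINT x|lborel. (conv K G x)^2) \<le> k1^2 * (LINT y|lborel. (G y)^2)"
    by (subst (asm) ennreal_le_iff) (auto simp: integral_nonneg_AE)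
qed

end

lemma conv_diff_AE:
  assumes Ki: "integrable lborel K" and G1: "L2_fun G1" and G2: "L2_fun G2"
  shows "AE x in lborel. conv K G1 x - conv K G2 x = conv K (\<lambda>y. G1 y - G2 y) x"
  using P_AE[OF Ki G1] P_AE[OF Ki G2]
proof eventually_elim
  fix x assume "P K G1 x \<noteq> \<infinity>" "P K G2 x \<noteq> \<infinity>"
  then have "integrable lborel (\<lambda>y. K (x - y) * G1 y)" "integrable lborel (\<lambda>y. K (x - y) * G2 y)"
    using good_x(2)[OF Ki G1] good_x(2)[OF Ki G2] by auto
  then show "conv K G1 x - conv K G2 x = conv K (\<lambda>y. G1 y - G2 y) x"
    unfolding conv_def by (simp add: right_diff_distrib)
qed


lemma linear_inner_rep:
  fixes D :: "real^'n \<Rightarrow> real"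
  assumes lin: "linear D"
  shows "D h = h \<bullet> (\<Sum>b\<in>Basis. D b *\<^sub>R b)"
proof -
  have "D h = D (\<Sum>b\<in>Basis. (h \<bullet> b) *\<^sub>R b)" by (simp add: euclidean_representation)
  also have "\<dots> = (\<Sum>b\<in>Basis. (h \<bullet> b) *\<^sub>R D b)"
    using lin by (simp add: linear_sum linear_scale)
  also have "\<dots> = h \<bullet> (\<Sum>b\<in>Basis. D b *\<^sub>R b)"
    by (simp add: inner_sum_right mult.commute)
  finally show ?thesis .
qed

lemma grad_has_derivative:
  fixes g :: "real^'n \<Rightarrow> real"
  assumes "g differentiable (at z)"
  shows "(g has_derivative (\<lambda>h. h \<bullet> grad g z)) (at z)"
proof -
  obtain D where D: "(g has_derivative D) (at z)" using assms unfolding differentiable_def by blast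
  then have "linear D" using has_derivative_linear by blast
  then have "D = (\<lambda>h. h \<bullet> (\<Sum>b\<in>Basis. D b *\<^sub>R b))" using linear_inner_rep by blast
  with D have "\<exists>v. (g has_derivative (\<lambda>h. h \<bullet> v)) (at z)" by metis
  then show ?thesis unfolding grad_def by (rule someI_ex)
qed

lemma lipschitz_grad:
  fixes f :: "real^'n \<Rightarrow> real"
  assumes der: "\<And>z. (f has_derivative (\<lambda>h. h \<bullet> G z)) (at z)"
    and bdd: "bdd_above (range (\<lambda>z. norm (G z)))"
  shows "\<bar>f x - f y\<bar> \<le> sup_norm G * norm (x - y)"
proof -
  have "norm (f x - f y) \<le> sup_norm G * norm (x - y)"
  proof (rule differentiable_bound[where S=UNIV and f'="\<lambda>z h. h \<bullet> G z"])
    show "(f has_derivative (\<lambda>h. h \<bullet> G z)) (at z within UNIV)" for z using der[of z] by simp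
    show "onorm (\<lambda>h. h \<bullet> G z) \<le> sup_norm G" for z
    proof -
      have "onorm (\<lambda>h. h \<bullet> G z) \<le> norm (G z)"
        by (rule onorm_le) (simp add: Cauchy_Schwarz_ineq2 mult.commute)
      also have "norm (G z) \<le> sup_norm G" unfolding sup_norm_def
        by (rule cSup_upper[OF _ bdd]) simp
      finally show ?thesis .
    qed
  qed auto
  then show ?thesis by simp
qed

lemma sup_norm_nonneg: "bdd_above (range (\<lambda>z. norm (G z))) \<Longrightarrow> sup_norm G \<ge> 0"
  unfolding sup_norm_def by (rule order_trans[OF norm_ge_zero cSup_upper[of "norm (G 0)"]]) auto

lemma sup_norm_ge: "bdd_above (range (\<lambda>z. norm (G z))) \<Longrightarrow> norm (G z) \<le> sup_norm G"
  unfolding sup_norm_def by (rule cSup_upper) auto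

lemma bdd_diff:
  assumes "bdd_above (range (\<lambda>z. norm (G1 z)))" "bdd_above (range (\<lambda>z. norm (G2 z)))"
  shows "bdd_above (range (\<lambda>z. norm (G1 z - G2 z)))"
proof -
  obtain B1 where B1: "\<And>z. norm (G1 z) \<le> B1" using assms(1) unfolding bdd_above_def by auto
  obtain B2 where B2: "\<And>z. norm (G2 z) \<le> B2" using assms(2) unfolding bdd_above_def by auto
  show ?thesis unfolding bdd_above_def
  proof (intro exI ballI)
    fix y assume "y \<in> range (\<lambda>z. norm (G1 z - G2 z))"
    then obtain z where "y = norm (G1 z - G2 z)" by auto
    then show "y \<le> B1 + B2" using norm_triangle_ineq4[of "G1 z" "G2 z"] B1[of z] B2[of z] by linarith
  qed
qed

lemma g_lip:
  fixes g :: "real^'n \<Rightarrow> real"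
  assumes "\<forall>z. g differentiable (at z)" "bdd_above (range (\<lambda>z. norm (grad g z)))"
  shows "\<bar>g x - g y\<bar> \<le> sup_norm (grad g) * norm (x - y)"
  using lipschitz_grad[of g "grad g"] grad_has_derivative assms by blast

lemma g_diff_lip:
  fixes g1 g2 :: "real^'n \<Rightarrow> real"
  assumes "\<forall>z. g1 differentiable (at z)" "\<forall>z. g2 differentiable (at z)"
    "bdd_above (range (\<lambda>z. norm (grad g1 z)))" "bdd_above (range (\<lambda>z. norm (grad g2 z)))"
    "g1 0 = 0" "g2 0 = 0"
  shows "\<bar>g1 c - g2 c\<bar> \<le> sup_norm (\<lambda>z. grad g1 z - grad g2 z) * norm c"
proof -
  have d: "((\<lambda>z. g1 z - g2 z) has_derivative (\<lambda>h. h \<bullet> (grad g1 z - grad g2 z))) (at z)" for z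
  proof -
    have "((\<lambda>z. g1 z - g2 z) has_derivative (\<lambda>h. h \<bullet> grad g1 z - h \<bullet> grad g2 z)) (at z)"
      using assms(1,2) by (intro has_derivative_diff grad_has_derivative) auto
    then show ?thesis by (simp add: inner_diff_right)
  qed
  have "\<bar>(g1 c - g2 c) - (g1 0 - g2 0)\<bar> \<le> sup_norm (\<lambda>z. grad g1 z - grad g2 z) * norm (c - 0)"
    by (rule lipschitz_grad[OF d bdd_diff[OF assms(3,4)]])
  then show ?thesis using assms(5,6) by simp
qed


declare Km[measurable del] Gm[measurable del] P_meas[measurable del] conv_meas[measurable del]

lemma conv_zero: "conv K (\<lambda>y. 0) = (\<lambda>x. 0)"
  unfolding conv_def by simp

lemma fourier_L2_zero: "fourier_L2 (\<lambda>x. 0) (\<lambda>p. 0)"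
  unfolding fourier_L2_TR TR_def by simp

lemma L2_fun_zero: "L2_fun (\<lambda>x. 0)" unfolding L2_fun_def by simp

lemma L_eq_zero: "L_eq a b (\<lambda>x. 0) (\<lambda>x. 0)"
  unfolding L_eq_def
  by (intro conjI L2_fun_zero exI[of _ "\<lambda>p. 0"] fourier_L2_zero) auto

lemma comp_main:
  assumes C: "C > 0" and Cb: "\<forall>p. p \<noteq> 0 \<longrightarrow> cmod (lambda_sym a b p) \<ge> C"
    and Ki: "integrable lborel K" and G1: "L2_fun G1" and G2: "L2_fun G2"
    and L1: "L_eq a b w1 (\<lambda>x. e * conv K G1 x)" and L2: "L_eq a b w2 (\<lambda>x. e * conv K G2 x)"
  shows "C * nL2 (\<lambda>x. w1 x - w2 x) \<le> \<bar>e\<bar> * (LINT x|lborel. \<bar>K x\<bar>) * nL2 (\<lambda>y. G1 y - G2 y)"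
proof -
  have G12: "L2_fun (\<lambda>y. G1 y - G2 y)" by (rule L2_fun_diff[OF G1 G2])
  have "C^2 * (LINT x|lborel. (w1 x - w2 x)^2) \<le> (LINT x|lborel. (e * conv K G1 x - e * conv K G2 x)^2)"
    using L_inv[OF L_eq_diff[OF L1 L2] C Cb] .
  also have "\<dots> = (LINT x|lborel. (e * conv K (\<lambda>y. G1 y - G2 y) x)^2)"
  proof (rule integral_cong_AE)
    show "AE x in lborel. (e * conv K G1 x - e * conv K G2 x)^2 = (e * conv K (\<lambda>y. G1 y - G2 y) x)^2"
      using conv_diff_AE[OF Ki G1 G2] by eventually_elim (simp add: right_diff_distrib[symmetric])
    show "(\<lambda>x. (e * conv K G1 x - e * conv K G2 x)^2) \<in> borel_measurable lborel"
      using conv_meas[OF Ki G1] conv_meas[OF Ki G2] by simp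
    show "(\<lambda>x. (e * conv K (\<lambda>y. G1 y - G2 y) x)^2) \<in> borel_measurable lborel"
      using conv_meas[OF Ki G12] by simp
  qed
  also have "\<dots> = e^2 * (LINT x|lborel. (conv K (\<lambda>y. G1 y - G2 y) x)^2)"
    by (simp add: power_mult_distrib)
  also have "\<dots> \<le> e^2 * ((k1 K)^2 * (LINT y|lborel. (G1 y - G2 y)^2))"
    using conv_L2(2)[OF Ki G12] by (intro mult_left_mono) auto
  finally have "(C * nL2 (\<lambda>x. w1 x - w2 x))^2 \<le> (\<bar>e\<bar> * k1 K * nL2 (\<lambda>y. G1 y - G2 y))^2"
    by (simp add: power_mult_distrib nL2_sq mult.assoc)
  moreover have "0 \<le> \<bar>e\<bar> * k1 K * nL2 (\<lambda>y. G1 y - G2 y)"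
    using k1_nonneg[OF Ki G12] nL2_nonneg[of "\<lambda>y. G1 y - G2 y"] by simp
  ultimately have "C * nL2 (\<lambda>x. w1 x - w2 x) \<le> \<bar>e\<bar> * k1 K * nL2 (\<lambda>y. G1 y - G2 y)"
    by (rule power2_le_imp_le)
  moreover have "k1 K = (LINT x|lborel. \<bar>K x\<bar>)" by (rule k1_def[OF Ki G12])
  ultimately show ?thesis by simp
qed

lemma comp_single:
  assumes C: "C > 0" and Cb: "\<forall>p. p \<noteq> 0 \<longrightarrow> cmod (lambda_sym a b p) \<ge> C"
    and Ki: "integrable lborel K" and G1: "L2_fun G1"
    and L1: "L_eq a b w1 (\<lambda>x. e * conv K G1 x)"
  shows "C * nL2 w1 \<le> \<bar>e\<bar> * (LINT x|lborel. \<bar>K x\<bar>) * nL2 G1"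
    "(LINT x|lborel. (e * conv K G1 x)^2) \<le> (\<bar>e\<bar> * (LINT x|lborel. \<bar>K x\<bar>) * nL2 G1)^2"
proof -
  have "C * nL2 (\<lambda>x. w1 x - 0) \<le> \<bar>e\<bar> * (LINT x|lborel. \<bar>K x\<bar>) * nL2 (\<lambda>y. G1 y - 0)"
  proof (rule comp_main[of C a b K G1 "\<lambda>x. 0" w1 e "\<lambda>x. 0", OF C Cb Ki G1 L2_fun_zero L1])
    show "L_eq a b (\<lambda>x. 0) (\<lambda>x. e * conv K (\<lambda>x. 0) x)" by (simp add: conv_zero L_eq_zero)
  qed
  then show "C * nL2 w1 \<le> \<bar>e\<bar> * (LINT x|lborel. \<bar>K x\<bar>) * nL2 G1" by simp
  have "(LINT x|lborel. (e * conv K G1 x)^2) = e^2 * (LINT x|lborel. (conv K G1 x)^2)"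
    by (simp add: power_mult_distrib)
  also have "\<dots> \<le> e^2 * ((k1 K)^2 * (LINT y|lborel. (G1 y)^2))"
    using conv_L2(2)[OF Ki G1] by (intro mult_left_mono) auto
  also have "\<dots> = (\<bar>e\<bar> * (LINT x|lborel. \<bar>K x\<bar>) * nL2 G1)^2"
    using k1_def[OF Ki G1] by (simp add: power_mult_distrib nL2_sq)
  finally show "(LINT x|lborel. (e * conv K G1 x)^2) \<le> (\<bar>e\<bar> * (LINT x|lborel. \<bar>K x\<bar>) * nL2 G1)^2" .
qed


declare borel_measurable_nth[measurable]


lemma norm_sq_vec: "(norm (x :: real^'n))^2 = (\<Sum>m\<in>UNIV. (x $ m)^2)"
  by (simp add: norm_vec_def L2_set_def sum_nonneg)

lemma L2_vec_comp:
  assumes "L2_vec u" shows "L2_fun (\<lambda>x. u x $ m)"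
proof -
  have um[measurable]: "u \<in> borel_measurable borel" using assms unfolding L2_vec_def by simp
  have i: "integrable lborel (\<lambda>x. (norm (u x))^2)" using assms unfolding L2_vec_def by simp
  show ?thesis unfolding L2_fun_def
  proof
    show "integrable lborel (\<lambda>x. (u x $ m)^2)"
    proof (rule Bochner_Integration.integrable_bound[OF i])
      show "AE x in lborel. norm ((u x $ m)^2) \<le> norm ((norm (u x))^2)"
      proof (rule AE_I2)
        fix x
        have "\<bar>u x $ m\<bar> \<le> norm (u x)" by (rule component_le_norm_cart)
        then have "\<bar>u x $ m\<bar>^2 \<le> (norm (u x))^2" by (intro power_mono) auto
        then show "norm ((u x $ m)^2) \<le> norm ((norm (u x))^2)" by simp
      qed
    qed measurable
  qed measurable
qed

lemma L2_vec_meas: "L2_vec u \<Longrightarrow> u \<in> borel_measurable borel"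
  unfolding L2_vec_def by simp

lemma L2_norm_vec_sum:
  assumes "L2_vec u"
  shows "(L2_norm_vec u)^2 = (\<Sum>m\<in>UNIV. (nL2 (\<lambda>x. u x $ m))^2)"
proof -
  have "(LINT x|lborel. (norm (u x))^2) = (LINT x|lborel. (\<Sum>m\<in>UNIV. (u x $ m)^2))"
    by (simp add: norm_sq_vec)
  also have "\<dots> = (\<Sum>m\<in>UNIV. (LINT x|lborel. (u x $ m)^2))"
    using L2_vec_comp[OF assms] by (intro Bochner_Integration.integral_sum) (auto simp: L2_fun_def)
  moreover have "0 \<le> (\<Sum>m\<in>UNIV. (LINT x|lborel. (u x $ m)^2))"
    by (intro sum_nonneg integral_nonneg_AE) auto
  ultimately show ?thesis unfolding L2_norm_vec_def nL2_sq
    by (simp add: integral_nonneg_AE)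
qed

lemma L2_norm_vec_nonneg: "L2_norm_vec u \<ge> 0"
  unfolding L2_norm_vec_def by (simp add: integral_nonneg_AE)

lemma L2_vec_add_diff:
  assumes u: "L2_vec u" and v: "L2_vec v"
  shows "L2_vec (\<lambda>x. u x + v x)" "L2_norm_vec (\<lambda>x. u x + v x) \<le> L2_norm_vec u + L2_norm_vec v"
    "L2_vec (\<lambda>x. u x - v x)" "L2_norm_vec (\<lambda>x. u x - v x) \<le> L2_norm_vec u + L2_norm_vec v"
proof -
  have [measurable]: "u \<in> borel_measurable borel" "v \<in> borel_measurable borel"
    using u v by (auto simp: L2_vec_def)
  have iu: "integrable lborel (\<lambda>x. (norm (u x))^2)" and iv: "integrable lborel (\<lambda>x. (norm (v x))^2)"
    using u v by (auto simp: L2_vec_def)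
  note M = Minkowski_integral[of "\<lambda>x. norm (u x)" lborel "\<lambda>x. norm (v x)"]
  have Mi: "integrable lborel (\<lambda>x. (norm (u x) + norm (v x))^2)" using M iu iv by auto
  have Ms: "sqrt (LINT x|lborel. (norm (u x) + norm (v x))^2) \<le> L2_norm_vec u + L2_norm_vec v"
    using M iu iv unfolding L2_norm_vec_def by auto
  have gen: "L2_vec w \<and> L2_norm_vec w \<le> L2_norm_vec u + L2_norm_vec v"
    if wm: "w \<in> borel_measurable borel" and wb: "\<And>x. norm (w x) \<le> norm (u x) + norm (v x)" for w
  proof -
    have pb: "(norm (w x))^2 \<le> (norm (u x) + norm (v x))^2" for x using wb[of x] by (simp add: power_mono)
    have iw: "integrable lborel (\<lambda>x. (norm (w x))^2)"
      by (rule Bochner_Integration.integrable_bound[OF Mi]) (use wm pb in \<open>auto intro!: AE_I2\<close>)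
    have "(LINT x|lborel. (norm (w x))^2) \<le> (LINT x|lborel. (norm (u x) + norm (v x))^2)"
      by (intro integral_mono iw Mi pb)
    then have "L2_norm_vec w \<le> sqrt (LINT x|lborel. (norm (u x) + norm (v x))^2)"
      unfolding L2_norm_vec_def by simp
    then show ?thesis using Ms iw wm unfolding L2_vec_def by auto
  qed
  show "L2_vec (\<lambda>x. u x + v x)" "L2_norm_vec (\<lambda>x. u x + v x) \<le> L2_norm_vec u + L2_norm_vec v"
    using gen[of "\<lambda>x. u x + v x"] norm_triangle_ineq by auto
  show "L2_vec (\<lambda>x. u x - v x)" "L2_norm_vec (\<lambda>x. u x - v x) \<le> L2_norm_vec u + L2_norm_vec v"
    using gen[of "\<lambda>x. u x - v x"] norm_triangle_ineq4 by auto
qed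

lemma L2_vec_norm_fun: assumes "L2_vec u" shows "L2_fun (\<lambda>x. norm (u x)) \<and> nL2 (\<lambda>x. norm (u x)) = L2_norm_vec u"
proof -
  have [measurable]: "u \<in> borel_measurable borel" using assms by (simp add: L2_vec_def)
  show ?thesis using assms unfolding L2_vec_def L2_fun_def nL2_def L2_norm_vec_def by simp
qed


lemma g_meas:
  fixes g :: "real^'n \<Rightarrow> real"
  assumes "\<forall>z. g differentiable (at z)"
  shows "g \<in> borel_measurable borel"
proof (rule borel_measurable_continuous_onI)
  show "continuous_on UNIV g"
    using assms by (intro continuous_at_imp_continuous_on ballI differentiable_imp_continuous_within) auto
qed

lemma G_L2:
  fixes g :: "real^'n \<Rightarrow> real" and u :: "real \<Rightarrow> real^'n"
  assumes gd: "\<forall>z. g differentiable (at z)" and g0: "g 0 = 0" and gb: "bdd_above (range (\<lambda>z. norm (grad g z)))"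
    and u: "L2_vec u"
  shows "L2_fun (\<lambda>y. g (u y))" "nL2 (\<lambda>y. g (u y)) \<le> sup_norm (grad g) * L2_norm_vec u"
proof -
  have [measurable]: "g \<in> borel_measurable borel" by (rule g_meas[OF gd])
  have [measurable]: "u \<in> borel_measurable borel" by (rule L2_vec_meas[OF u])
  have nu: "L2_fun (\<lambda>x. norm (u x))" "nL2 (\<lambda>x. norm (u x)) = L2_norm_vec u" using L2_vec_norm_fun[OF u] by auto
  have b: "AE y in lborel. \<bar>g (u y)\<bar> \<le> sup_norm (grad g) * \<bar>norm (u y)\<bar>"
    using g_lip[OF gd gb, of "u _" 0] g0 by (intro AE_I2) simp
  have S: "sup_norm (grad g) \<ge> 0" by (rule sup_norm_nonneg[OF gb])
  show "L2_fun (\<lambda>y. g (u y))" by (rule L2_fun_bound(1)[OF nu(1) _ b S]) simp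
  show "nL2 (\<lambda>y. g (u y)) \<le> sup_norm (grad g) * L2_norm_vec u"
    using L2_fun_bound(2)[OF nu(1) _ b S] nu(2) by simp
qed

lemma G_diff1:
  fixes g :: "real^'n \<Rightarrow> real" and u v :: "real \<Rightarrow> real^'n"
  assumes gd: "\<forall>z. g differentiable (at z)" and g0: "g 0 = 0" and gb: "bdd_above (range (\<lambda>z. norm (grad g z)))"
    and u: "L2_vec u" and v: "L2_vec v"
  shows "nL2 (\<lambda>y. g (u y) - g (v y)) \<le> sup_norm (grad g) * L2_norm_vec (\<lambda>y. u y - v y)"
proof -
  have [measurable]: "g \<in> borel_measurable borel" by (rule g_meas[OF gd])
  have [measurable]: "u \<in> borel_measurable borel" "v \<in> borel_measurable borel"
    using L2_vec_meas[OF u] L2_vec_meas[OF v] by auto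
  have uv: "L2_vec (\<lambda>y. u y - v y)" by (rule L2_vec_add_diff(3)[OF u v])
  have nu: "L2_fun (\<lambda>x. norm (u x - v x))" "nL2 (\<lambda>x. norm (u x - v x)) = L2_norm_vec (\<lambda>y. u y - v y)"
    using L2_vec_norm_fun[OF uv] by auto
  have b: "AE y in lborel. \<bar>g (u y) - g (v y)\<bar> \<le> sup_norm (grad g) * \<bar>norm (u y - v y)\<bar>"
    using g_lip[OF gd gb] by (intro AE_I2) simp
  have S: "sup_norm (grad g) \<ge> 0" by (rule sup_norm_nonneg[OF gb])
  show ?thesis using L2_fun_bound(2)[OF nu(1) _ b S] nu(2) by simp
qed

lemma G_diff2:
  fixes g1 g2 :: "real^'n \<Rightarrow> real" and u :: "real \<Rightarrow> real^'n"
  assumes gd1: "\<forall>z. g1 differentiable (at z)" and gd2: "\<forall>z. g2 differentiable (at z)"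
    and g10: "g1 0 = 0" and g20: "g2 0 = 0"
    and gb1: "bdd_above (range (\<lambda>z. norm (grad g1 z)))" and gb2: "bdd_above (range (\<lambda>z. norm (grad g2 z)))"
    and u: "L2_vec u"
  shows "nL2 (\<lambda>y. g1 (u y) - g2 (u y)) \<le> sup_norm (\<lambda>z. grad g1 z - grad g2 z) * L2_norm_vec u"
proof -
  have [measurable]: "g1 \<in> borel_measurable borel" "g2 \<in> borel_measurable borel"
    using g_meas[OF gd1] g_meas[OF gd2] by auto
  have [measurable]: "u \<in> borel_measurable borel" by (rule L2_vec_meas[OF u])
  have nu: "L2_fun (\<lambda>x. norm (u x))" "nL2 (\<lambda>x. norm (u x)) = L2_norm_vec u" using L2_vec_norm_fun[OF u] by auto
  have b: "AE y in lborel. \<bar>g1 (u y) - g2 (u y)\<bar> \<le> sup_norm (\<lambda>z. grad g1 z - grad g2 z) * \<bar>norm (u y)\<bar>"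
    using g_diff_lip[OF gd1 gd2 gb1 gb2 g10 g20] by (intro AE_I2) simp
  have S: "sup_norm (\<lambda>z. grad g1 z - grad g2 z) \<ge> 0" by (rule sup_norm_nonneg[OF bdd_diff[OF gb1 gb2]])
  show ?thesis using L2_fun_bound(2)[OF nu(1) _ b S] nu(2) by simp
qed

lemma sumsq_le:
  fixes k X :: "'n::finite \<Rightarrow> real"
  assumes "\<And>m. X m \<ge> 0"
  shows "(\<Sum>m\<in>UNIV. (k m)^2 * (X m)^2) \<le> (\<Sum>m\<in>UNIV. (k m)^2) * (\<Sum>m\<in>UNIV. X m)^2"
proof -
  have "(X m)^2 \<le> (\<Sum>m\<in>UNIV. X m)^2" for m
    using assms by (intro power_mono member_le_sum) auto
  then have "(\<Sum>m\<in>UNIV. (k m)^2 * (X m)^2) \<le> (\<Sum>m\<in>UNIV. (k m)^2 * (\<Sum>m\<in>UNIV. X m)^2)"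
    by (intro sum_mono mult_left_mono) auto
  also have "\<dots> = (\<Sum>m\<in>UNIV. (k m)^2) * (\<Sum>m\<in>UNIV. X m)^2" by (simp add: sum_distrib_right)
  finally show ?thesis .
qed


lemma edge_zero:
  fixes a b :: "'n::finite \<Rightarrow> real" and K :: "'n \<Rightarrow> real \<Rightarrow> real"
    and g :: "'n \<Rightarrow> real^'n \<Rightarrow> real" and u0 up :: "real \<Rightarrow> real^'n" and eps :: "'n \<Rightarrow> real"
  assumes C: "C > 0" and Cb: "\<forall>m p. p \<noteq> 0 \<longrightarrow> cmod (lambda_sym (a m) (b m) p) \<ge> C"
    and KL1: "\<forall>m. integrable lborel (K m)"
    and gd: "\<forall>m z. g m differentiable (at z)" and g0: "\<forall>m. g m 0 = 0"
    and gb: "\<forall>m. bdd_above (range (\<lambda>z. norm (grad (g m) z)))"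
    and gM: "(\<Sum>m\<in>UNIV. sup_norm (grad (g m))) \<le> M"
    and u0: "L2_vec u0" and u00: "L2_norm_vec u0 = 0" and up: "L2_vec up"
    and hfix: "\<forall>m. L_eq (a m) (b m) (\<lambda>x. up x $ m) (\<lambda>x. eps m * conv (K m) (\<lambda>y. g m (u0 y + up y)) x)"
    and epsb: "\<forall>m. \<bar>eps m\<bar> \<le> ep" and ep0: "ep \<ge> 0"
    and small: "ep * M * sqrt (\<Sum>m\<in>UNIV. (LINT x|lborel. \<bar>K m x\<bar>)^2) \<le> C"
  shows "L2_norm_vec up = 0"
proof -
  define k where "k m = (LINT x|lborel. \<bar>K m x\<bar>)" for m
  define L where "L m = sup_norm (grad (g m))" for m
  define Ks where "Ks = sqrt (\<Sum>m\<in>UNIV. (k m)^2)"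
  define P where "P = L2_norm_vec up"
  define au where "au = (\<lambda>y. u0 y + up y)"
  have k0: "k m \<ge> 0" for m unfolding k_def by simp
  have L0: "L m \<ge> 0" for m unfolding L_def using gb sup_norm_nonneg by blast
  have Ks2: "Ks^2 = (\<Sum>m\<in>UNIV. (k m)^2)" unfolding Ks_def by (simp add: sum_nonneg)
  have Ks0: "Ks \<ge> 0" unfolding Ks_def by (simp add: sum_nonneg)
  have P0: "P \<ge> 0" unfolding P_def by (rule L2_norm_vec_nonneg)
  have "(\<Sum>m\<in>UNIV. L m) \<ge> 0" using L0 by (simp add: sum_nonneg)
  then have M0: "M \<ge> 0" using gM unfolding L_def by linarith
  have au: "L2_vec au" unfolding au_def by (rule L2_vec_add_diff(1)[OF u0 up])
  have aun: "L2_norm_vec au \<le> P" unfolding au_def P_def using L2_vec_add_diff(2)[OF u0 up] u00 by simp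
  define h where "h m = (\<lambda>x. eps m * conv (K m) (\<lambda>y. g m (au y)) x)" for m
  have gdm: "\<forall>z. g m differentiable (at z)" for m using gd by simp
  have GL2: "L2_fun (\<lambda>y. g m (au y))" for m using G_L2(1)[OF gdm g0[rule_format] gb[rule_format] au] .
  have Gn: "nL2 (\<lambda>y. g m (au y)) \<le> L m * P" for m
  proof -
    have "nL2 (\<lambda>y. g m (au y)) \<le> L m * L2_norm_vec au" unfolding L_def using G_L2(2)[OF gdm g0[rule_format] gb[rule_format] au] .
    also have "\<dots> \<le> L m * P" using aun L0 by (intro mult_left_mono) auto
    finally show ?thesis .
  qed
  have Leq: "L_eq (a m) (b m) (\<lambda>x. up x $ m) (h m)" for m using hfix unfolding h_def au_def by auto
  define A where "A m = C^2 * (LINT x|lborel. (up x $ m)^2)" for m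
  define B where "B m = (LINT x|lborel. (h m x)^2)" for m
  have AB: "A m \<le> B m" for m unfolding A_def B_def using L_inv[OF Leq C] Cb by simp
  have Bb: "B m \<le> (ep * k m * L m * P)^2" for m
  proof -
    have "B m \<le> (\<bar>eps m\<bar> * k m * nL2 (\<lambda>y. g m (au y)))^2"
    proof -
      have Cbm: "\<forall>p. p \<noteq> 0 \<longrightarrow> cmod (lambda_sym (a m) (b m) p) \<ge> C" using Cb by simp
      have Km: "integrable lborel (K m)" using KL1 by simp
      show ?thesis unfolding B_def k_def
        using comp_single(2)[OF C Cbm Km GL2 Leq[of m, unfolded h_def]] unfolding h_def .
    qed
    also have "\<dots> \<le> (ep * k m * L m * P)^2"
    proof (intro power_mono)
      have "\<bar>eps m\<bar> * k m * nL2 (\<lambda>y. g m (au y)) \<le> ep * k m * (L m * P)"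
        using epsb Gn k0 nL2_nonneg ep0 by (intro mult_mono) auto
      then show "\<bar>eps m\<bar> * k m * nL2 (\<lambda>y. g m (au y)) \<le> ep * k m * L m * P" by (simp add: mult.assoc)
      show "0 \<le> \<bar>eps m\<bar> * k m * nL2 (\<lambda>y. g m (au y))" using k0 nL2_nonneg by simp
    qed
    finally show ?thesis .
  qed
  have "(\<Sum>m\<in>UNIV. B m) \<le> (\<Sum>m\<in>UNIV. (ep * P)^2 * ((k m)^2 * (L m)^2))"
    using Bb by (intro sum_mono) (simp add: power_mult_distrib mult_ac)
  also have "\<dots> = (ep * P)^2 * (\<Sum>m\<in>UNIV. (k m)^2 * (L m)^2)" by (simp add: sum_distrib_left)
  also have "\<dots> \<le> (ep * P)^2 * ((\<Sum>m\<in>UNIV. (k m)^2) * (\<Sum>m\<in>UNIV. L m)^2)"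
    using sumsq_le[of L k] L0 by (intro mult_left_mono) auto
  also have "\<dots> \<le> (ep * P)^2 * (Ks^2 * M^2)"
  proof (intro mult_left_mono)
    have "(\<Sum>m\<in>UNIV. L m)^2 \<le> M^2" using gM L0 unfolding L_def by (intro power_mono sum_nonneg) auto
    then show "(\<Sum>m\<in>UNIV. (k m)^2) * (\<Sum>m\<in>UNIV. L m)^2 \<le> Ks^2 * M^2"
      unfolding Ks2 by (intro mult_left_mono) (auto simp: sum_nonneg)
  qed auto
  also have "\<dots> = (ep * M * Ks)^2 * P^2" by (simp add: power_mult_distrib)
  also have "\<dots> \<le> C^2 * P^2"
  proof (intro mult_right_mono power_mono)
    show "ep * M * Ks \<le> C" using small unfolding Ks_def k_def by simp
  qed (use ep0 M0 Ks0 in auto)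
  also have "\<dots> = (\<Sum>m\<in>UNIV. A m)"
    unfolding P_def L2_norm_vec_sum[OF up] A_def by (simp add: nL2_sq sum_distrib_left)
  finally have sBA: "(\<Sum>m\<in>UNIV. B m - A m) \<le> 0" by (simp add: sum_subtractf)
  have "(\<Sum>m\<in>UNIV. B m - A m) \<ge> 0" using AB by (simp add: sum_nonneg)
  then have "(\<Sum>m\<in>UNIV. B m - A m) = 0" using sBA by linarith
  then have BA: "B m - A m = 0" for m using AB by (subst (asm) sum_nonneg_eq_0_iff) auto
  have z: "(LINT x|lborel. (up x $ m)^2) = 0" for m
  proof (rule L_strict[OF Leq C])
    show "\<forall>p. p \<noteq> 0 \<longrightarrow> C \<le> cmod (lambda_sym (a m) (b m) p)" using Cb by blast
    show "AE p in lborel. cmod (lambda_sym (a m) (b m) p) \<noteq> C" by (rule lambda_level_null)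
    show "(LINT x|lborel. (h m x)^2) \<le> C^2 * (LINT x|lborel. (up x $ m)^2)"
      using BA[of m] unfolding A_def B_def by simp
  qed
  have "P^2 = 0" unfolding P_def L2_norm_vec_sum[OF up] nL2_sq z by simp
  then show ?thesis unfolding P_def by simp
qed


theorem theorem4:
  fixes a b :: "'n::finite \<Rightarrow> real"
    and f K :: "'n \<Rightarrow> real \<Rightarrow> real"
    and g1 g2 :: "'n \<Rightarrow> real^'n \<Rightarrow> real"
    and u0 up1 up2 :: "real \<Rightarrow> real^'n"
    and C M \<rho> :: real
    and eps :: "'n \<Rightarrow> real"
  assumes b_nz: "\<forall>m. b m \<noteq> 0"
    and C_pos: "C > 0"
    and C_bound: "\<forall>m p. p \<noteq> 0 \<longrightarrow> cmod (lambda_sym (a m) (b m) p) \<ge> C"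
    and f_L2: "\<forall>m. L2_fun (f m)"
    and f_nz: "\<exists>m x. f m x \<noteq> 0"
    and K_L1: "\<forall>m. integrable lborel (K m)"
    and K_pos: "sqrt (\<Sum>m\<in>UNIV. (LINT x|lborel. \<bar>K m x\<bar>)^2) > 0"
    and M_pos: "M > 0"
    and g1_diff: "\<forall>m z. g1 m differentiable (at z)"
    and g2_diff: "\<forall>m z. g2 m differentiable (at z)"
    and g1_0: "\<forall>m. g1 m 0 = 0"
    and g2_0: "\<forall>m. g2 m 0 = 0"
    and g1_nz: "\<exists>m z. g1 m z \<noteq> 0"
    and g2_nz: "\<exists>m z. g2 m z \<noteq> 0"
    and g1_bdd: "\<forall>m. bdd_above (range (\<lambda>z. norm (grad (g1 m) z)))"
    and g2_bdd: "\<forall>m. bdd_above (range (\<lambda>z. norm (grad (g2 m) z)))"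
    and g1_M: "(\<Sum>m\<in>UNIV. sup_norm (grad (g1 m))) \<le> M"
    and g2_M: "(\<Sum>m\<in>UNIV. sup_norm (grad (g2 m))) \<le> M"
    and u0_L2: "L2_vec u0"
    and u0_eq: "\<forall>m. L_eq (a m) (b m) (\<lambda>x. u0 x $ m) (f m)"
    and rho: "0 < \<rho>" "\<rho> \<le> 1"
    and eps_nonneg: "\<forall>m. eps m \<ge> 0"
    and eps_pos: "0 < Max (range eps)"
    and eps_small: "Max (range eps) \<le> \<rho> * C /
          (M * sqrt (\<Sum>m\<in>UNIV. (LINT x|lborel. \<bar>K m x\<bar>)^2) * (L2_norm_vec u0 + 1))"
    and up1_L2: "L2_vec up1" and up1_ball: "L2_norm_vec up1 \<le> \<rho>"
    and up1_fix: "\<forall>m. L_eq (a m) (b m) (\<lambda>x. up1 x $ m)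
          (\<lambda>x. eps m * conv (K m) (\<lambda>y. g1 m (u0 y + up1 y)) x)"
    and up2_L2: "L2_vec up2" and up2_ball: "L2_norm_vec up2 \<le> \<rho>"
    and up2_fix: "\<forall>m. L_eq (a m) (b m) (\<lambda>x. up2 x $ m)
          (\<lambda>x. eps m * conv (K m) (\<lambda>y. g2 m (u0 y + up2 y)) x)"
  shows "L2_norm_vec (\<lambda>x. (u0 x + up1 x) - (u0 x + up2 x)) \<le>
     Max (range eps) / (1 - Max (range eps) * M * sqrt (\<Sum>m\<in>UNIV. (LINT x|lborel. \<bar>K m x\<bar>)^2) / C)
     * (sqrt (\<Sum>m\<in>UNIV. (LINT x|lborel. \<bar>K m x\<bar>)^2) / C) * (L2_norm_vec u0 + 1)
     * (\<Sum>m\<in>UNIV. sup_norm (\<lambda>z. grad (g1 m) z - grad (g2 m) z))"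
proof -
  define ep where "ep = Max (range eps)"
  define k where "k m = (LINT x|lborel. \<bar>K m x\<bar>)" for m
  define Ks where "Ks = sqrt (\<Sum>m\<in>UNIV. (k m)^2)"
  define U where "U = L2_norm_vec u0"
  define S where "S = (\<Sum>m\<in>UNIV. sup_norm (\<lambda>z. grad (g1 m) z - grad (g2 m) z))"
  define d where "d = L2_norm_vec (\<lambda>x. up1 x - up2 x)"
  define sig where "sig = ep * M * Ks / C"
  have lhs: "L2_norm_vec (\<lambda>x. (u0 x + up1 x) - (u0 x + up2 x)) = d" unfolding d_def by simp
  have Ks_eq: "sqrt (\<Sum>m\<in>UNIV. (LINT x|lborel. \<bar>K m x\<bar>)^2) = Ks" unfolding Ks_def k_def ..
  have epsb: "\<bar>eps m\<bar> \<le> ep" for m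
  proof -
    have "eps m \<le> ep" unfolding ep_def by (rule Max_ge) auto
    then show ?thesis using eps_nonneg by simp
  qed
  have ep0: "ep > 0" unfolding ep_def by (rule eps_pos)
  have Ks0: "Ks > 0" using K_pos unfolding Ks_eq .
  have k0: "k m \<ge> 0" for m unfolding k_def by simp
  have Ks2: "Ks^2 = (\<Sum>m\<in>UNIV. (k m)^2)" unfolding Ks_def by (simp add: sum_nonneg)
  have U0: "U \<ge> 0" unfolding U_def by (rule L2_norm_vec_nonneg)
  have d0: "d \<ge> 0" unfolding d_def by (rule L2_norm_vec_nonneg)
  have Dm0: "sup_norm (\<lambda>z. grad (g1 m) z - grad (g2 m) z) \<ge> 0" for m
    using g1_bdd g2_bdd by (intro sup_norm_nonneg bdd_diff) auto
  have S0: "S \<ge> 0" unfolding S_def using Dm0 by (simp add: sum_nonneg)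
  have Lm0: "sup_norm (grad (g1 m)) \<ge> 0" for m using g1_bdd by (intro sup_norm_nonneg) auto
  have small: "ep \<le> \<rho> * C / (M * Ks * (U + 1))" using eps_small unfolding ep_def[symmetric] Ks_eq U_def .
  have den: "M * Ks * (U + 1) > 0" using M_pos Ks0 U0 by simp
  have sig_le: "sig \<le> \<rho> / (U + 1)"
  proof -
    have "ep * (M * Ks * (U + 1)) \<le> \<rho> * C" using small den by (simp add: le_divide_eq)
    then have "ep * M * Ks * (U + 1) \<le> \<rho> * C" by (simp add: mult.assoc)
    then show ?thesis unfolding sig_def using C_pos U0 by (simp add: divide_le_eq le_divide_eq mult.commute mult.left_commute)
  qed
  have rho_le: "\<rho> / (U + 1) \<le> 1" using rho U0 by (simp add: divide_le_eq)
  have sig1: "sig \<le> 1" using sig_le rho_le by linarith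
  have lhs2: "Max (range eps) / (1 - Max (range eps) * M * sqrt (\<Sum>m\<in>UNIV. (LINT x|lborel. \<bar>K m x\<bar>)^2) / C)
     * (sqrt (\<Sum>m\<in>UNIV. (LINT x|lborel. \<bar>K m x\<bar>)^2) / C) * (L2_norm_vec u0 + 1)
     * (\<Sum>m\<in>UNIV. sup_norm (\<lambda>z. grad (g1 m) z - grad (g2 m) z))
     = ep / (1 - sig) * (Ks / C) * (U + 1) * S"
    unfolding Ks_eq ep_def[symmetric] U_def[symmetric] S_def[symmetric] sig_def ..
  show ?thesis
    unfolding lhs lhs2
  proof (cases "sig < 1")
    case False
    then have sig_eq: "sig = 1" using sig1 by simp
    then have "1 \<le> \<rho> / (U + 1)" using sig_le by simp
    then have "U + 1 \<le> \<rho>" using U0 by (simp add: le_divide_eq)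
    then have Uz: "U = 0" using rho U0 by simp
    have epMK: "ep * M * Ks \<le> C" using sig_eq C_pos unfolding sig_def by simp
    have z1: "L2_norm_vec up1 = 0"
      by (rule edge_zero[OF C_pos C_bound K_L1 g1_diff g1_0 g1_bdd g1_M u0_L2 _ up1_L2 up1_fix _ _, of ep])
         (use Uz epsb ep0 epMK in \<open>auto simp: U_def Ks_def k_def\<close>)
    have z2: "L2_norm_vec up2 = 0"
      by (rule edge_zero[OF C_pos C_bound K_L1 g2_diff g2_0 g2_bdd g2_M u0_L2 _ up2_L2 up2_fix _ _, of ep])
         (use Uz epsb ep0 epMK in \<open>auto simp: U_def Ks_def k_def\<close>)
    have "d \<le> L2_norm_vec up1 + L2_norm_vec up2" unfolding d_def by (rule L2_vec_add_diff(4)[OF up1_L2 up2_L2])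
    then have "d = 0" using z1 z2 d0 by simp
    then show "d \<le> ep / (1 - sig) * (Ks / C) * (U + 1) * S" using sig_eq by simp
  next
    case True
    define a1 where "a1 = (\<lambda>y. u0 y + up1 y)"
    define a2 where "a2 = (\<lambda>y. u0 y + up2 y)"
    define W where "W = L2_norm_vec a2"
    define L where "L m = sup_norm (grad (g1 m))" for m
    define Dm where "Dm m = sup_norm (\<lambda>z. grad (g1 m) z - grad (g2 m) z)" for m
    define X where "X m = L m * d + Dm m * W" for m
    have a1: "L2_vec a1" unfolding a1_def by (rule L2_vec_add_diff(1)[OF u0_L2 up1_L2])
    have a2: "L2_vec a2" unfolding a2_def by (rule L2_vec_add_diff(1)[OF u0_L2 up2_L2])
    have W0: "W \<ge> 0" unfolding W_def by (rule L2_norm_vec_nonneg)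
    have WU: "W \<le> U + 1"
    proof -
      have "W \<le> U + L2_norm_vec up2" unfolding W_def a2_def U_def by (rule L2_vec_add_diff(2)[OF u0_L2 up2_L2])
      then show ?thesis using up2_ball rho by linarith
    qed
    have a12: "(\<lambda>y. a1 y - a2 y) = (\<lambda>y. up1 y - up2 y)" unfolding a1_def a2_def by auto
    have X0: "X m \<ge> 0" for m unfolding X_def L_def Dm_def using Lm0 Dm0 d0 W0 by simp
    have comp: "nL2 (\<lambda>x. up1 x $ m - up2 x $ m) \<le> (ep / C) * k m * X m" for m
    proof -
      have gd1: "\<forall>z. g1 m differentiable (at z)" and gd2: "\<forall>z. g2 m differentiable (at z)"
        using g1_diff g2_diff by auto
      have gb1: "bdd_above (range (\<lambda>z. norm (grad (g1 m) z)))" and gb2: "bdd_above (range (\<lambda>z. norm (grad (g2 m) z)))"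
        using g1_bdd g2_bdd by auto
      have G1: "L2_fun (\<lambda>y. g1 m (a1 y))" by (rule G_L2(1)[OF gd1 g1_0[rule_format] gb1 a1])
      have G1': "L2_fun (\<lambda>y. g1 m (a2 y))" by (rule G_L2(1)[OF gd1 g1_0[rule_format] gb1 a2])
      have G2: "L2_fun (\<lambda>y. g2 m (a2 y))" by (rule G_L2(1)[OF gd2 g2_0[rule_format] gb2 a2])
      have e1: "nL2 (\<lambda>y. g1 m (a1 y) - g1 m (a2 y)) \<le> L m * d"
        using G_diff1[OF gd1 g1_0[rule_format] gb1 a1 a2] unfolding a12 L_def d_def .
      have e2: "nL2 (\<lambda>y. g1 m (a2 y) - g2 m (a2 y)) \<le> Dm m * W"
        using G_diff2[OF gd1 gd2 g1_0[rule_format] g2_0[rule_format] gb1 gb2 a2] unfolding Dm_def W_def .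
      have "nL2 (\<lambda>y. g1 m (a1 y) - g2 m (a2 y)) =
          nL2 (\<lambda>y. (g1 m (a1 y) - g1 m (a2 y)) + (g1 m (a2 y) - g2 m (a2 y)))" by simp
      also have "\<dots> \<le> nL2 (\<lambda>y. g1 m (a1 y) - g1 m (a2 y)) + nL2 (\<lambda>y. g1 m (a2 y) - g2 m (a2 y))"
        by (rule nL2_add[OF L2_fun_diff[OF G1 G1'] L2_fun_diff[OF G1' G2]])
      also have "\<dots> \<le> X m" unfolding X_def using e1 e2 by linarith
      finally have GG: "nL2 (\<lambda>y. g1 m (a1 y) - g2 m (a2 y)) \<le> X m" .
      have Cbm: "\<forall>p. p \<noteq> 0 \<longrightarrow> cmod (lambda_sym (a m) (b m) p) \<ge> C" using C_bound by simp
      have Km: "integrable lborel (K m)" using K_L1 by simp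
      have L1: "L_eq (a m) (b m) (\<lambda>x. up1 x $ m) (\<lambda>x. eps m * conv (K m) (\<lambda>y. g1 m (a1 y)) x)"
        using up1_fix unfolding a1_def by simp
      have L2: "L_eq (a m) (b m) (\<lambda>x. up2 x $ m) (\<lambda>x. eps m * conv (K m) (\<lambda>y. g2 m (a2 y)) x)"
        using up2_fix unfolding a2_def by simp
      have "C * nL2 (\<lambda>x. up1 x $ m - up2 x $ m) \<le> \<bar>eps m\<bar> * k m * nL2 (\<lambda>y. g1 m (a1 y) - g2 m (a2 y))"
        unfolding k_def by (rule comp_main[OF C_pos Cbm Km G1 G2 L1 L2])
      also have "\<dots> \<le> ep * k m * X m"
        using epsb[of m] k0[of m] GG nL2_nonneg by (intro mult_mono) (auto intro: mult_right_mono)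
      finally have "C * nL2 (\<lambda>x. up1 x $ m - up2 x $ m) \<le> ep * k m * X m" .
      then show ?thesis using C_pos by (simp add: pos_le_divide_eq mult.commute mult.left_commute)
    qed
    have dd: "L2_vec (\<lambda>x. up1 x - up2 x)" by (rule L2_vec_add_diff(3)[OF up1_L2 up2_L2])
    have "d^2 = (\<Sum>m\<in>UNIV. (nL2 (\<lambda>x. up1 x $ m - up2 x $ m))^2)"
      unfolding d_def L2_norm_vec_sum[OF dd] by simp
    also have "\<dots> \<le> (\<Sum>m\<in>UNIV. ((ep / C) * k m * X m)^2)"
      using comp nL2_nonneg by (intro sum_mono power_mono) auto
    also have "\<dots> = (\<Sum>m\<in>UNIV. (ep / C)^2 * ((k m)^2 * (X m)^2))"
      by (rule sum.cong) (simp_all add: power_mult_distrib power_divide)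
    also have "\<dots> = (ep / C)^2 * (\<Sum>m\<in>UNIV. (k m)^2 * (X m)^2)"
      by (rule sum_distrib_left[symmetric])
    also have "\<dots> \<le> (ep / C)^2 * (Ks^2 * (\<Sum>m\<in>UNIV. X m)^2)"
      using sumsq_le[of X k] X0 unfolding Ks2 by (intro mult_left_mono) auto
    also have "\<dots> = ((ep / C) * Ks * (\<Sum>m\<in>UNIV. X m))^2" by (simp add: power_mult_distrib power_divide)
    finally have "d^2 \<le> ((ep / C) * Ks * (\<Sum>m\<in>UNIV. X m))^2" .
    moreover have "0 \<le> (ep / C) * Ks * (\<Sum>m\<in>UNIV. X m)"
      using ep0 C_pos Ks0 X0 by (simp add: sum_nonneg)
    ultimately have d1: "d \<le> (ep / C) * Ks * (\<Sum>m\<in>UNIV. X m)" by (rule power2_le_imp_le)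
    have sumX: "(\<Sum>m\<in>UNIV. X m) \<le> d * M + (U + 1) * S"
    proof -
      have "(\<Sum>m\<in>UNIV. X m) = d * (\<Sum>m\<in>UNIV. L m) + W * S"
        unfolding X_def S_def Dm_def by (simp add: sum.distrib sum_distrib_left mult.commute)
      also have "\<dots> \<le> d * M + (U + 1) * S"
      proof (rule add_mono)
        show "d * (\<Sum>m\<in>UNIV. L m) \<le> d * M" using d0 g1_M unfolding L_def by (rule mult_left_mono[rotated])
        show "W * S \<le> (U + 1) * S" using WU S0 by (rule mult_right_mono)
      qed
      finally show ?thesis .
    qed
    have c0: "(ep / C) * Ks \<ge> 0" using ep0 C_pos Ks0 by simp
    have "d \<le> (ep / C) * Ks * (d * M + (U + 1) * S)"
      using d1 mult_left_mono[OF sumX c0] by linarith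
    also have "\<dots> = sig * d + (ep / C) * Ks * (U + 1) * S" unfolding sig_def by (simp add: algebra_simps add_divide_distrib)
    finally have "(1 - sig) * d \<le> (ep / C) * Ks * (U + 1) * S" by (simp add: algebra_simps)
    moreover define R where "R = (ep / C) * Ks * (U + 1) * S"
    ultimately have "d * (1 - sig) \<le> R" by (simp add: mult.commute)
    moreover have "1 - sig > 0" using True by simp
    ultimately have "d \<le> R / (1 - sig)" by (simp add: pos_le_divide_eq)
    then have "d \<le> (ep / C) * Ks * (U + 1) * S / (1 - sig)" unfolding R_def .
    also have "\<dots> = ep / (1 - sig) * (Ks / C) * (U + 1) * S" by simp
    finally show "d \<le> ep / (1 - sig) * (Ks / C) * (U + 1) * S" .
  qed
qed


end
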